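(* Let $\mathcal L$ be a finite language consisting of relation and/or constant symbols, and let $\mathcal H$ be a non-trivial basic hereditary $\mathcal L$-property. Then there are $k\in\mathbb N$ and polynomials $p_1,\dots,p_k$ with rational coefficients such that $|\mathcal H_n|=\sum_{i=1}^k p_i(n)i^n$ for all sufficiently large $n$.
   Context: A hereditary $\mathcal L$-property is a class $\mathcal H$ of $\mathcal L$-structures (finite or infinite) closed under isomorphism and under substructures (a substructure contains the interpretations of all constants). $\mathcal H_n$ is the set of members of $\mathcal H$ with underlying set $[n]$. $\mathcal H$ is trivial if $\mathcal H_n=\emptyset$ for all sufficiently large $n$. For an $\mathcal L$-structure $\mathcal M$ and $a,b\in M$, write $a\sim b$ iff the permutation of $M$ exchanging $a$ and $b$ and fixing all other elements is an automorphism of $\mathcal M$ (equivalently, $ab$ and $ba$ have the same quantifier-free type over $M\setminus\{a,b\}$); this is an equivalence relation. $\mathcal H$ is basic if there is $k\in\mathbb N$ such that every member of $\mathcal H$ has at most $k$ distinct $\sim$-classes. *)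

theory Defs
  imports Main "HOL-Computational_Algebra.Polynomial"
begin

text \<open>A finite language: a finite set R of relation symbols with arities ar,
and a finite set C of constant symbols.\<close>

record ('r, 'c) struc =
  carrier :: "nat set"
  rel :: "'r \<Rightarrow> nat list \<Rightarrow> bool"
  cst :: "'c \<Rightarrow> nat"

text \<open>Well-formedness (canonical representation): relations only hold of
tuples of the right length from the carrier and only for symbols in R;
constants lie in the carrier; unused constant symbols are mapped to 0.\<close>
definition wf_struc :: "'r set \<Rightarrow> ('r \<Rightarrow> nat) \<Rightarrow> 'c set \<Rightarrow> ('r, 'c) struc \<Rightarrow> bool" where
  "wf_struc R ar C M \<longleftrightarrow>
     (\<forall>r xs. rel M r xs \<longrightarrow> r \<in> R \<and> length xs = ar r \<and> set xs \<subseteq> carrier M) \<and>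
     (\<forall>c\<in>C. cst M c \<in> carrier M) \<and> (\<forall>c. c \<notin> C \<longrightarrow> cst M c = 0)"

definition is_iso :: "'r set \<Rightarrow> ('r \<Rightarrow> nat) \<Rightarrow> 'c set \<Rightarrow> (nat \<Rightarrow> nat) \<Rightarrow> ('r, 'c) struc \<Rightarrow> ('r, 'c) struc \<Rightarrow> bool" where
  "is_iso R ar C f M N \<longleftrightarrow>
     bij_betw f (carrier M) (carrier N) \<and>
     (\<forall>r\<in>R. \<forall>xs. length xs = ar r \<and> set xs \<subseteq> carrier M \<longrightarrow> (rel N r (map f xs) \<longleftrightarrow> rel M r xs)) \<and>
     (\<forall>c\<in>C. cst N c = f (cst M c))"

definition substruc :: "'r set \<Rightarrow> ('r \<Rightarrow> nat) \<Rightarrow> 'c set \<Rightarrow> ('r, 'c) struc \<Rightarrow> ('r, 'c) struc \<Rightarrow> bool" where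
  "substruc R ar C N M \<longleftrightarrow>
     wf_struc R ar C N \<and> carrier N \<subseteq> carrier M \<and>
     (\<forall>r xs. rel N r xs \<longleftrightarrow> rel M r xs \<and> set xs \<subseteq> carrier N) \<and>
     cst N = cst M"

definition hereditary :: "'r set \<Rightarrow> ('r \<Rightarrow> nat) \<Rightarrow> 'c set \<Rightarrow> ('r, 'c) struc set \<Rightarrow> bool" where
  "hereditary R ar C H \<longleftrightarrow>
     (\<forall>M\<in>H. wf_struc R ar C M) \<and>
     (\<forall>M\<in>H. \<forall>N f. wf_struc R ar C N \<and> is_iso R ar C f M N \<longrightarrow> N \<in> H) \<and>
     (\<forall>M\<in>H. \<forall>N. substruc R ar C N M \<longrightarrow> N \<in> H)"

definition transp_map :: "nat \<Rightarrow> nat \<Rightarrow> nat \<Rightarrow> nat" where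
  "transp_map a b x = (if x = a then b else if x = b then a else x)"

definition swap_equiv :: "'r set \<Rightarrow> ('r \<Rightarrow> nat) \<Rightarrow> 'c set \<Rightarrow> ('r, 'c) struc \<Rightarrow> (nat \<times> nat) set" where
  "swap_equiv R ar C M =
     {(a, b). a \<in> carrier M \<and> b \<in> carrier M \<and> is_iso R ar C (transp_map a b) M M}"

definition basic :: "'r set \<Rightarrow> ('r \<Rightarrow> nat) \<Rightarrow> 'c set \<Rightarrow> ('r, 'c) struc set \<Rightarrow> bool" where
  "basic R ar C H \<longleftrightarrow>
     (\<exists>k::nat. \<forall>M\<in>H. finite (carrier M // swap_equiv R ar C M) \<and>
                       card (carrier M // swap_equiv R ar C M) \<le> k)"

definition H_n :: "('r, 'c) struc set \<Rightarrow> nat \<Rightarrow> ('r, 'c) struc set" where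
  "H_n H n = {M \<in> H. carrier M = {1..n}}"

definition trivial :: "('r, 'c) struc set \<Rightarrow> bool" where
  "trivial H \<longleftrightarrow> (\<exists>N. \<forall>n\<ge>N. H_n H n = {})"

end

theory Submission
  imports Defs "HOL-Library.FuncSet" "HOL-Library.Infinite_Set" "HOL-Library.Nat_Bijection"
    "HOL-Combinatorics.Permutations"
begin

definition eseq :: "nat \<Rightarrow> nat \<Rightarrow> nat \<Rightarrow> rat" where
  "eseq i j n = of_nat (n choose j) * of_nat i ^ (n - j)"

inductive_set ES :: "(nat \<Rightarrow> rat) set" where
  base: "eseq i j \<in> ES"
| add: "a \<in> ES \<Longrightarrow> b \<in> ES \<Longrightarrow> (\<lambda>n. a n + b n) \<in> ES"
| smul: "a \<in> ES \<Longrightarrow> (\<lambda>n. c * a n) \<in> ES"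

lemma ES_zero: "(\<lambda>n. 0) \<in> ES"
  using ES.smul[OF ES.base, of 0 0 0] by simp

lemma ES_sum: "finite A \<Longrightarrow> (\<And>x. x \<in> A \<Longrightarrow> f x \<in> ES) \<Longrightarrow> (\<lambda>n. \<Sum>x\<in>A. f x n) \<in> ES"
proof (induction A rule: finite_induct)
  case empty then show ?case by (simp add: ES_zero)
next
  case (insert x F)
  have "(\<lambda>n. f x n + (\<Sum>x\<in>F. f x n)) \<in> ES"
    using insert by (intro ES.add) auto
  then show ?case using insert by simp
qed

lemma ES_diff: "a \<in> ES \<Longrightarrow> b \<in> ES \<Longrightarrow> (\<lambda>n. a n - b n) \<in> ES"
  using ES.add[of a "\<lambda>n. (-1) * b n"] ES.smul[of b "-1"] by simp

lemma ES_cong: "a \<in> ES \<Longrightarrow> (\<And>n. a n = b n) \<Longrightarrow> b \<in> ES"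
proof -
  assume "a \<in> ES" "\<And>n. a n = b n"
  then have "a = b" by auto
  then show ?thesis using \<open>a \<in> ES\<close> by simp
qed

lemma ES_delta: "(\<lambda>n. if n = v then 1 else 0) \<in> ES"
proof (rule ES_cong[OF ES.base[of 0 v]])
  fix n show "eseq 0 v n = (if n = v then 1 else 0)"
    by (cases "n < v") (auto simp: eseq_def)
qed

lemma choose_shift_nat: "(n choose v) * ((n - v) choose j) = ((v + j) choose v) * (n choose (v + j))"
proof (cases "v + j \<le> n")
  case True
  then show ?thesis using choose_mult[of v "v+j" n] by (simp add: mult.commute)
next
  case False
  then have "n < v + j" by simp
  then have z: "n choose (v + j) = 0" by simp
  show ?thesis
  proof (cases "v \<le> n")
    case True
    then have "n - v < j" using False by simp
    then have "(n - v) choose j = 0" by (rule binomial_eq_0)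
    then show ?thesis using \<open>n < v + j\<close> by (simp add: binomial_eq_0)
  next
    case False
    then show ?thesis using \<open>n < v + j\<close> by (simp add: binomial_eq_0)
  qed
qed

lemma ES_shift: "a \<in> ES \<Longrightarrow> (\<lambda>n. of_nat (n choose v) * a (n - v)) \<in> ES"
proof (induction rule: ES.induct)
  case (base i j)
  have "(\<lambda>n. of_nat ((v + j) choose v) * eseq i (v + j) n) \<in> ES" by (rule ES.smul[OF ES.base])
  then show ?case
  proof (rule ES_cong)
    fix n
    have "of_nat (n choose v) * eseq i j (n - v) =
          (of_nat ((n choose v) * ((n - v) choose j)) :: rat) * of_nat i ^ (n - v - j)"
      by (simp add: eseq_def)
    also have "\<dots> = of_nat ((v + j) choose v) * eseq i (v + j) n"
      by (simp only: choose_shift_nat) (simp add: eseq_def diff_diff_left)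
    finally show "of_nat ((v + j) choose v) * eseq i (v + j) n = of_nat (n choose v) * eseq i j (n - v)"
      by simp
  qed
next
  case (add a b)
  from ES.add[OF add.IH] show ?case by (simp add: algebra_simps)
next
  case (smul a c)
  from ES.smul[OF smul.IH, of c] show ?case by (simp add: algebra_simps)
qed

lemma binom_transform_nat:
  "(\<Sum>l\<le>n. (n choose l) * ((l choose j) * i ^ (l - j))) = (n choose j) * (Suc i) ^ (n - j)"
proof (cases "j \<le> n")
  case False
  then have "\<And>l. l \<le> n \<Longrightarrow> l choose j = 0" by auto
  then have "(\<Sum>l\<le>n. (n choose l) * ((l choose j) * i ^ (l - j))) = 0" by simp
  moreover have "n choose j = 0" using False by simp
  ultimately show ?thesis using False by (simp add: binomial_eq_0)
next
  case True
  have "(\<Sum>l\<le>n. (n choose l) * ((l choose j) * i ^ (l - j))) =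
        (\<Sum>l\<in>{j..n}. (n choose l) * ((l choose j) * i ^ (l - j)))"
    by (rule sum.mono_neutral_right) auto
  also have "\<dots> = (\<Sum>l\<in>{j..n}. (n choose j) * (((n - j) choose (l - j)) * i ^ (l - j)))"
    by (rule sum.cong) (auto simp: choose_mult mult.assoc[symmetric])
  also have "\<dots> = (\<Sum>u\<in>{0..n-j}. (n choose j) * (((n - j) choose u) * i ^ u))"
    using sum.shift_bounds_cl_nat_ivl[where g="\<lambda>l. (n choose j) * (((n - j) choose (l - j)) * i ^ (l - j))" and m=0 and k=j and n="n-j"]
    using True by simp
  also have "\<dots> = (n choose j) * (\<Sum>u\<le>n-j. ((n - j) choose u) * i ^ u)"
    by (simp add: sum_distrib_left atMost_atLeast0 mult.assoc)
  also have "\<dots> = (n choose j) * (i + 1) ^ (n - j)"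
    using binomial_ring[of i 1 "n-j"] by simp
  finally show ?thesis by simp
qed

lemma ES_transform: "a \<in> ES \<Longrightarrow> (\<lambda>n. \<Sum>l\<le>n. of_nat (n choose l) * a l) \<in> ES"
proof (induction rule: ES.induct)
  case (base i j)
  show ?case
  proof (rule ES_cong[OF ES.base[of "Suc i" j]])
    fix n
    have "(\<Sum>l\<le>n. of_nat (n choose l) * eseq i j l) =
          (of_nat (\<Sum>l\<le>n. (n choose l) * ((l choose j) * i ^ (l - j))) :: rat)"
      by (simp add: eseq_def)
    also have "\<dots> = eseq (Suc i) j n"
      by (simp only: binom_transform_nat) (simp add: eseq_def)
    finally show "eseq (Suc i) j n = (\<Sum>l\<le>n. of_nat (n choose l) * eseq i j l)" by simp
  qed
next
  case (add a b)
  from ES.add[OF add.IH] show ?case by (simp add: algebra_simps sum.distrib)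
next
  case (smul a c)
  from ES.smul[OF smul.IH, of c] show ?case by (simp add: algebra_simps sum_distrib_left)
qed

lemma sum_atMost_reflect: "(\<Sum>l\<le>(n::nat). f (n - l)) = (\<Sum>l\<le>n. (f l :: 'a::comm_monoid_add))"
  using sum.atLeastAtMost_rev[of "\<lambda>l. f (n - l)" 0 n] by (simp add: atMost_atLeast0)

lemma ES_transform': "a \<in> ES \<Longrightarrow> (\<lambda>n. \<Sum>l\<le>n. of_nat (n choose l) * a (n - l)) \<in> ES"
proof -
  assume "a \<in> ES"
  from ES_transform[OF this] show ?thesis
  proof (rule ES_cong)
    fix n
    have "(\<Sum>l\<le>n. of_nat (n choose l) * a (n - l)) = (\<Sum>l\<le>n. of_nat (n choose (n - l)) * a (n - l))"
    proof (rule sum.cong[OF refl])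
      fix l assume "l \<in> {..n}"
      then have "n choose l = n choose (n - l)" by (intro binomial_symmetric) simp
      then show "of_nat (n choose l) * a (n - l) = of_nat (n choose (n - l)) * a (n - l)" by simp
    qed
    also have "\<dots> = (\<Sum>l\<le>n. of_nat (n choose l) * a l)"
      by (rule sum_atMost_reflect[where f="\<lambda>l. of_nat (n choose l) * a l"])
    finally show "(\<Sum>l\<le>n. of_nat (n choose l) * a l) = (\<Sum>l\<le>n. of_nat (n choose l) * a (n - l))" by simp
  qed
qed


definition EPform :: "(nat \<Rightarrow> rat) \<Rightarrow> bool" where
  "EPform a \<longleftrightarrow> (\<exists>(k::nat) (p::nat \<Rightarrow> rat poly) N. \<forall>n\<ge>N.
      a n = (\<Sum>i=1..k. poly (p i) (of_nat n) * of_nat i ^ n))"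

lemma sum_if_le_nat:
  assumes "k1 \<le> (k::nat)"
  shows "(\<Sum>i=1..k. (if i \<le> k1 then f i else 0)) = (\<Sum>i=1..k1. (f i :: 'a::comm_monoid_add))"
proof -
  have "(\<Sum>i=1..k. (if i \<le> k1 then f i else 0)) = (\<Sum>i=1..k1. (if i \<le> k1 then f i else 0))"
    using assms by (intro sum.mono_neutral_right) auto
  also have "\<dots> = (\<Sum>i=1..k1. f i)" by (rule sum.cong) auto
  finally show ?thesis .
qed

lemma binomial_poly:
  "\<exists>q::rat poly. \<forall>n. poly q (of_nat n) = of_nat (n choose j)"
proof -
  define q where "q = smult (1 / fact j) (\<Prod>l<j. [:- of_nat l, 1:] :: rat poly)"
  have "poly q (of_nat n) = of_nat (n choose j)" for n
  proof -
    have "(of_nat (n choose j) :: rat) = (of_nat n gchoose j)" by (rule binomial_gbinomial)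
    also have "\<dots> = (\<Prod>i=0..<j. of_nat n - of_nat i) / fact j" by (simp add: gbinomial_prod_rev)
    also have "\<dots> = poly q (of_nat n)"
      by (simp add: q_def poly_prod lessThan_atLeast0)
    finally show ?thesis by simp
  qed
  then show ?thesis by blast
qed

lemma EPform_eseq: "EPform (eseq i j)"
proof (cases "i = 0")
  case True
  have "\<forall>n\<ge>Suc j. eseq i j n = (\<Sum>i=1..0. poly (0::rat poly) (of_nat n) * of_nat i ^ n)"
    using True by (auto simp: eseq_def)
  then show ?thesis unfolding EPform_def by (intro exI[of _ 0] exI[of _ "\<lambda>_. 0"] exI[of _ "Suc j"]) simp
next
  case False
  obtain q :: "rat poly" where q: "\<And>n. poly q (of_nat n) = of_nat (n choose j)" using binomial_poly by blast
  define p where "p = (\<lambda>i'. if i' = i then smult (1 / of_nat i ^ j) q else 0)"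
  have "eseq i j n = (\<Sum>i'=1..i. poly (p i') (of_nat n) * of_nat i' ^ n)" if "n \<ge> j" for n
  proof -
    have "(\<Sum>i'=1..i. poly (p i') (of_nat n) * of_nat i' ^ n) =
          (\<Sum>i'=1..i. if i' = i then poly (smult (1 / of_nat i ^ j) q) (of_nat n) * of_nat i ^ n else 0)"
      by (rule sum.cong) (auto simp: p_def)
    also have "\<dots> = poly (smult (1 / of_nat i ^ j) q) (of_nat n) * of_nat i ^ n"
      using False by (simp add: sum.delta')
    also have "\<dots> = of_nat (n choose j) * (of_nat i ^ n / of_nat i ^ j)"
      by (simp add: q)
    also have "of_nat i ^ n / of_nat i ^ j = (of_nat i ^ (n - j) :: rat)"
      using False that by (simp add: power_diff)
    finally show ?thesis by (simp add: eseq_def)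
  qed
  then show ?thesis unfolding EPform_def by (intro exI[of _ i] exI[of _ p] exI[of _ j]) simp
qed

lemma EPform_add: "EPform a \<Longrightarrow> EPform b \<Longrightarrow> EPform (\<lambda>n. a n + b n)"
proof -
  assume "EPform a" "EPform b"
  then obtain k1 p1 N1 k2 p2 N2 where
    A: "\<forall>n\<ge>N1. a n = (\<Sum>i=1..k1. poly (p1 i) (of_nat n) * of_nat i ^ n)" and
    B: "\<forall>n\<ge>N2. b n = (\<Sum>i=1..k2. poly (p2 i) (of_nat n) * of_nat i ^ n)"
    unfolding EPform_def by blast
  define p where "p = (\<lambda>i. (if i \<le> k1 then p1 i else 0) + (if i \<le> k2 then p2 i else 0))"
  have "a n + b n = (\<Sum>i=1..k1+k2. poly (p i) (of_nat n) * of_nat i ^ n)" if "n \<ge> max N1 N2" for n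
  proof -
    have "(\<Sum>i=1..k1+k2. poly (p i) (of_nat n) * of_nat i ^ n) =
          (\<Sum>i=1..k1+k2. (if i \<le> k1 then poly (p1 i) (of_nat n) * of_nat i ^ n else 0)) +
          (\<Sum>i=1..k1+k2. (if i \<le> k2 then poly (p2 i) (of_nat n) * of_nat i ^ n else 0))"
      by (simp add: sum.distrib[symmetric]) (rule sum.cong, auto simp: p_def algebra_simps)
    also have "\<dots> = (\<Sum>i=1..k1. poly (p1 i) (of_nat n) * of_nat i ^ n) + (\<Sum>i=1..k2. poly (p2 i) (of_nat n) * of_nat i ^ n)"
      using sum_if_le_nat[of k1 "k1+k2" "\<lambda>i. poly (p1 i) (of_nat n) * of_nat i ^ n"]
        sum_if_le_nat[of k2 "k1+k2" "\<lambda>i. poly (p2 i) (of_nat n) * of_nat i ^ n"] by simp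
    finally show ?thesis using A B that by simp
  qed
  then show ?thesis unfolding EPform_def by (intro exI[of _ "k1+k2"] exI[of _ p] exI[of _ "max N1 N2"]) simp
qed

lemma EPform_smul: "EPform a \<Longrightarrow> EPform (\<lambda>n. c * a n)"
proof -
  assume "EPform a"
  then obtain k1 p1 N1 where
    A: "\<forall>n\<ge>N1. a n = (\<Sum>i=1..k1. poly (p1 i) (of_nat n) * of_nat i ^ n)"
    unfolding EPform_def by blast
  have "c * a n = (\<Sum>i=1..k1. poly (smult c (p1 i)) (of_nat n) * of_nat i ^ n)" if "n \<ge> N1" for n
    using A that by (simp add: sum_distrib_left mult.assoc)
  then show ?thesis unfolding EPform_def by (intro exI[of _ k1] exI[of _ "\<lambda>i. smult c (p1 i)"] exI[of _ N1]) simp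
qed

lemma ES_EPform: "a \<in> ES \<Longrightarrow> EPform a"
  by (induction rule: ES.induct) (auto intro: EPform_eseq EPform_add EPform_smul)

definition le_t :: "nat \<Rightarrow> nat \<Rightarrow> (nat \<Rightarrow> nat) \<Rightarrow> (nat \<Rightarrow> nat) \<Rightarrow> bool" where
  "le_t t m s s' \<longleftrightarrow> (\<forall>c<m. s c = s' c \<or> (t \<le> s c \<and> s c \<le> s' c))"

definition cellmono :: "nat \<Rightarrow> nat \<Rightarrow> ((nat \<Rightarrow> nat) \<Rightarrow> nat) \<Rightarrow> bool" where
  "cellmono t m w \<longleftrightarrow> (\<forall>s s'. le_t t m s s' \<longrightarrow> w s' \<le> w s)"

lemma const_or_incr:
  fixes y :: "nat \<Rightarrow> nat"
  shows "\<exists>\<tau>::nat\<Rightarrow>nat. strict_mono \<tau> \<and> (\<forall>i j. i \<le> j \<longrightarrow> (y (\<tau> i) = y (\<tau> j) \<or> (t \<le> y (\<tau> i) \<and> y (\<tau> i) \<le> y (\<tau> j))))"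
proof (cases "\<exists>v. infinite {i. y i = v}")
  case True
  then obtain v where inf: "infinite {i. y i = v}" by blast
  define \<tau> where "\<tau> = enumerate {i. y i = v}"
  have "strict_mono \<tau>" unfolding \<tau>_def by (rule strict_mono_enumerate[OF inf])
  moreover have "y (\<tau> i) = v" for i unfolding \<tau>_def using enumerate_in_set[OF inf, of i] by simp
  ultimately show ?thesis by (intro exI[where x=\<tau>]) auto
next
  case False
  then have fin: "finite {i. y i = v}" for v by blast
  have "\<exists>j>a. B \<le> y j" for a B
  proof -
    have "{i. y i < B} = (\<Union>v<B. {i. y i = v})" by auto
    then have "finite {i. y i < B}" using fin by simp
    then have "infinite (UNIV - {i. y i < B})" by (simp add: Diff_infinite_finite)
    then obtain j where "j > a" "j \<in> UNIV - {i. y i < B}"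
      unfolding infinite_nat_iff_unbounded by blast
    then show ?thesis by auto
  qed
  then have "\<forall>a. \<exists>j. a < j \<and> max t (y a) \<le> y j" by blast
  then obtain f where f: "\<And>a. a < f a \<and> max t (y a) \<le> y (f a)" by metis
  define \<tau> where "\<tau> i = (f ^^ Suc i) 0" for i
  have tS: "\<tau> (Suc i) = f (\<tau> i)" for i by (simp add: \<tau>_def)
  have "strict_mono \<tau>" unfolding strict_mono_Suc_iff tS using f by blast
  moreover have "t \<le> y (\<tau> i)" for i
    by (cases i) (use f in \<open>auto simp: \<tau>_def\<close>)
  moreover have "y (\<tau> i) \<le> y (\<tau> j)" if "i \<le> j" for i j
    using lift_Suc_mono_le[of "\<lambda>i. y (\<tau> i)", OF _ that] f tS by (metis max.bounded_iff)
  ultimately show ?thesis by blast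
qed

lemma good_seq:
  fixes x :: "nat \<Rightarrow> nat \<Rightarrow> nat"
  shows "\<exists>\<sigma>::nat\<Rightarrow>nat. strict_mono \<sigma> \<and> (\<forall>i j. i \<le> j \<longrightarrow> le_t t m (x (\<sigma> i)) (x (\<sigma> j)))"
proof (induction m)
  case 0
  show ?case by (intro exI[where x=id]) (auto simp: le_t_def strict_mono_def)
next
  case (Suc m)
  then obtain \<sigma> :: "nat \<Rightarrow> nat" where \<sigma>: "strict_mono \<sigma>" "\<And>i j. i \<le> j \<Longrightarrow> le_t t m (x (\<sigma> i)) (x (\<sigma> j))" by blast
  obtain \<tau> :: "nat \<Rightarrow> nat" where \<tau>: "strict_mono \<tau>"
    "\<And>i j. i \<le> j \<Longrightarrow> (x (\<sigma> (\<tau> i)) m = x (\<sigma> (\<tau> j)) m \<or> (t \<le> x (\<sigma> (\<tau> i)) m \<and> x (\<sigma> (\<tau> i)) m \<le> x (\<sigma> (\<tau> j)) m))"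
    using const_or_incr[of "\<lambda>i. x (\<sigma> i) m" t] by blast
  have "strict_mono (\<sigma> \<circ> \<tau>)" using \<sigma>(1) \<tau>(1) by (simp add: strict_mono_def)
  moreover have "le_t t (Suc m) (x ((\<sigma> \<circ> \<tau>) i)) (x ((\<sigma> \<circ> \<tau>) j))" if "i \<le> j" for i j
  proof -
    have "\<tau> i \<le> \<tau> j" using \<tau>(1) that by (simp add: strict_mono_less_eq)
    then have "le_t t m (x (\<sigma> (\<tau> i))) (x (\<sigma> (\<tau> j)))" by (rule \<sigma>(2))
    then show ?thesis using \<tau>(2)[OF that] unfolding le_t_def by (auto simp: less_Suc_eq)
  qed
  ultimately show ?case by blast
qed

lemma no_infinite_descent_nat: "\<not> (\<forall>i. (v::nat\<Rightarrow>nat) (Suc i) < v i)"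
proof
  assume h: "\<forall>i. v (Suc i) < v i"
  have "v i + i \<le> v 0" for i
  proof (induction i)
    case (Suc i) then show ?case using h[rule_format, of i] by simp
  qed simp
  from this[of "Suc (v 0)"] show False by simp
qed

lemma le_t_upd:
  assumes "le_t t m s s'" "l = l' \<or> (t \<le> l \<and> l \<le> l')"
  shows "le_t t (Suc m) (s(m := l)) (s'(m := l'))"
  using assms unfolding le_t_def by (auto simp: less_Suc_eq)

lemma cellmono_slice: "cellmono t (Suc m) w \<Longrightarrow> cellmono t m (\<lambda>s. w (s(m := l)))"
  unfolding cellmono_def using le_t_upd by blast

lemma stabilize:
  assumes cm: "cellmono t (Suc m) w"
  shows "\<exists>L. \<forall>l\<ge>L. \<forall>s. w (s(m := l)) = w (s(m := L))"
proof (rule ccontr)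
  assume "\<not> ?thesis"
  then have nst: "\<forall>L. \<exists>l\<ge>L. \<exists>s. w (s(m := l)) \<noteq> w (s(m := L))" by blast
  have "\<exists>l s. L < l \<and> w (s(m := l)) < w (s(m := L))" if "t \<le> L" for L
  proof -
    obtain l s where ls: "l \<ge> L" "w (s(m := l)) \<noteq> w (s(m := L))" using nst by blast
    have "le_t t (Suc m) (s(m := L)) (s(m := l))"
      by (rule le_t_upd) (use ls that in \<open>auto simp: le_t_def\<close>)
    then have "w (s(m := l)) \<le> w (s(m := L))" using cm unfolding cellmono_def by blast
    moreover have "l \<noteq> L" using ls by auto
    ultimately show ?thesis using ls by (intro exI[of _ l] exI[of _ s]) auto
  qed
  then have "\<forall>L. \<exists>p. t \<le> L \<longrightarrow> L < fst p \<and> w ((snd p)(m := fst p)) < w ((snd p)(m := L))" by auto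
  then obtain F where F: "\<And>L. t \<le> L \<Longrightarrow> L < fst (F L) \<and> w ((snd (F L))(m := fst (F L))) < w ((snd (F L))(m := L))"
    by metis
  define Ls where "Ls i = ((\<lambda>L. fst (F L)) ^^ i) t" for i
  have LsS: "Ls (Suc i) = fst (F (Ls i))" for i by (simp add: Ls_def)
  have Lt: "t \<le> Ls i" for i
  proof (induction i)
    case 0 then show ?case by (simp add: Ls_def)
  next
    case (Suc i) then show ?case using F[OF Suc] LsS[of i] by simp
  qed
  have Linc: "Ls i < Ls (Suc i)" for i using F[OF Lt[of i]] LsS[of i] by simp
  then have Lmono: "i \<le> j \<Longrightarrow> Ls i \<le> Ls j" for i j using lift_Suc_mono_le[of Ls] less_imp_le by metis
  define x where "x i = (snd (F (Ls i)))(m := Ls i)" for i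
  obtain \<sigma> :: "nat \<Rightarrow> nat" where \<sigma>: "strict_mono \<sigma>" "\<And>i j. i \<le> j \<Longrightarrow> le_t t (Suc m) (x (\<sigma> i)) (x (\<sigma> j))"
    using good_seq[where x=x and t=t and m="Suc m"] by blast
  have "w (x (\<sigma> (Suc i))) < w (x (\<sigma> i))" for i
  proof -
    define a where "a = \<sigma> i"
    define b where "b = \<sigma> (Suc i)"
    have ab: "Suc a \<le> b" using \<sigma>(1) unfolding a_def b_def strict_mono_def by (simp add: Suc_le_eq)
    define s where "s = snd (F (Ls a))"
    define l' where "l' = fst (F (Ls a))"
    have l': "l' = Ls (Suc a)" by (simp add: l'_def LsS)
    have lt: "w (s(m := l')) < w (x a)"
      using F[OF Lt[of a]] by (simp add: x_def s_def l'_def)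
    have lexab: "le_t t (Suc m) (x a) (x b)" using \<sigma>(2)[of i "Suc i"] by (simp add: a_def b_def)
    have "le_t t (Suc m) (s(m := l')) (x b)"
      unfolding le_t_def
    proof (intro allI impI)
      fix c assume c: "c < Suc m"
      show "(s(m := l')) c = x b c \<or> t \<le> (s(m := l')) c \<and> (s(m := l')) c \<le> x b c"
      proof (cases "c = m")
        case True
        have "l' \<le> Ls b" using Lmono[OF ab] l' by simp
        then show ?thesis using True Lt[of "Suc a"] l' by (simp add: x_def)
      next
        case False
        then have "c < m" using c by simp
        then show ?thesis using lexab False c unfolding le_t_def by (auto simp: x_def s_def)
      qed
    qed
    then have "w (x b) \<le> w (s(m := l'))" using cm unfolding cellmono_def by blast
    then show ?thesis using lt by (simp add: a_def b_def)
  qed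
  then show False using no_infinite_descent_nat[of "\<lambda>i. w (x (\<sigma> i))"] by blast
qed

definition sz :: "nat set \<Rightarrow> (nat \<Rightarrow> nat) \<Rightarrow> nat \<Rightarrow> nat" where
  "sz X \<phi> = (\<lambda>c. card {x\<in>X. \<phi> x = c})"

definition SumC :: "nat set \<Rightarrow> nat \<Rightarrow> ((nat \<Rightarrow> nat) \<Rightarrow> nat) \<Rightarrow> rat" where
  "SumC X m w = (\<Sum>\<phi>\<in>X \<rightarrow>\<^sub>E {..<m}. of_nat (w (sz X \<phi>)))"

lemma sz_bij:
  assumes "bij_betw \<pi> X Y"
  shows "sz Y (\<lambda>y. \<phi> (inv_into X \<pi> y)) = sz X \<phi>"
proof (rule ext)
  fix c
  have "{y\<in>Y. \<phi> (inv_into X \<pi> y) = c} = \<pi> ` {x\<in>X. \<phi> x = c}"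
  proof (rule set_eqI, rule iffI)
    fix y assume y: "y \<in> {y\<in>Y. \<phi> (inv_into X \<pi> y) = c}"
    then have "inv_into X \<pi> y \<in> X" "\<pi> (inv_into X \<pi> y) = y"
      using assms by (auto simp: bij_betw_def f_inv_into_f inv_into_into)
    then show "y \<in> \<pi> ` {x\<in>X. \<phi> x = c}" using y by (metis (mono_tags, lifting) image_eqI mem_Collect_eq)
  next
    fix y assume "y \<in> \<pi> ` {x\<in>X. \<phi> x = c}"
    then obtain x where x: "x \<in> X" "\<phi> x = c" "y = \<pi> x" by auto
    then show "y \<in> {y\<in>Y. \<phi> (inv_into X \<pi> y) = c}"
      using assms by (auto simp: bij_betw_def)
  qed
  moreover have "inj_on \<pi> {x\<in>X. \<phi> x = c}" using assms by (auto simp: bij_betw_def intro: inj_on_subset)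
  ultimately show "sz Y (\<lambda>y. \<phi> (inv_into X \<pi> y)) c = sz X \<phi> c"
    by (simp add: sz_def card_image)
qed

lemma SumC_bij:
  assumes "bij_betw \<pi> X Y"
  shows "SumC X m w = SumC Y m w"
  unfolding SumC_def
proof (rule sum.reindex_bij_witness[where j="\<lambda>\<phi>. restrict (\<lambda>y. \<phi> (inv_into X \<pi> y)) Y"
      and i="\<lambda>\<psi>. restrict (\<lambda>x. \<psi> (\<pi> x)) X"])
  have bi: "bij_betw (inv_into X \<pi>) Y X" using assms by (rule bij_betw_inv_into)
  fix \<phi> assume \<phi>: "\<phi> \<in> X \<rightarrow>\<^sub>E {..<m}"
  show "restrict (\<lambda>x. restrict (\<lambda>y. \<phi> (inv_into X \<pi> y)) Y (\<pi> x)) X = \<phi>"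
  proof
    fix x show "restrict (\<lambda>x. restrict (\<lambda>y. \<phi> (inv_into X \<pi> y)) Y (\<pi> x)) X x = \<phi> x"
      using assms \<phi> by (cases "x \<in> X") (auto simp: bij_betw_def PiE_def extensional_def)
  qed
  show "restrict (\<lambda>y. \<phi> (inv_into X \<pi> y)) Y \<in> Y \<rightarrow>\<^sub>E {..<m}"
    using \<phi> bi by (auto simp: bij_betw_def PiE_def Pi_def)
  have "sz Y (restrict (\<lambda>y. \<phi> (inv_into X \<pi> y)) Y) = sz Y (\<lambda>y. \<phi> (inv_into X \<pi> y))"
    unfolding sz_def by (rule ext) (rule arg_cong[where f=card], auto)
  then show "of_nat (w (sz Y (restrict (\<lambda>y. \<phi> (inv_into X \<pi> y)) Y))) = (of_nat (w (sz X \<phi>)) :: rat)"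
    using sz_bij[OF assms] by simp
next
  fix \<psi> assume \<psi>: "\<psi> \<in> Y \<rightarrow>\<^sub>E {..<m}"
  show "restrict (\<lambda>y. restrict (\<lambda>x. \<psi> (\<pi> x)) X (inv_into X \<pi> y)) Y = \<psi>"
  proof
    fix y show "restrict (\<lambda>y. restrict (\<lambda>x. \<psi> (\<pi> x)) X (inv_into X \<pi> y)) Y y = \<psi> y"
      using assms \<psi> by (cases "y \<in> Y") (auto simp: bij_betw_def PiE_def extensional_def f_inv_into_f inv_into_into)
  qed
  show "restrict (\<lambda>x. \<psi> (\<pi> x)) X \<in> X \<rightarrow>\<^sub>E {..<m}"
    using \<psi> assms by (auto simp: bij_betw_def PiE_def Pi_def)
qed

definition Sseq :: "nat \<Rightarrow> ((nat \<Rightarrow> nat) \<Rightarrow> nat) \<Rightarrow> nat \<Rightarrow> rat" where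
  "Sseq m w n = SumC {..<n} m w"

lemma SumC_card: "finite X \<Longrightarrow> SumC X m w = Sseq m w (card X)"
proof -
  assume "finite X"
  then obtain h where "bij_betw h X {0..<card X}" using ex_bij_betw_finite_nat by blast
  then show ?thesis unfolding Sseq_def using SumC_bij by (simp add: atLeast0LessThan)
qed

lemma Sseq_0: "Sseq 0 w n = of_nat (w (\<lambda>_. 0)) * (if n = 0 then 1 else 0)"
proof (cases "n = 0")
  case True
  then show ?thesis by (simp add: Sseq_def SumC_def sz_def)
next
  case False
  then have "{..<n} \<rightarrow>\<^sub>E {..<0::nat} = {}" by (intro PiE_empty_range[of 0]) auto
  then show ?thesis using False by (simp add: Sseq_def SumC_def)
qed

lemma SumC_Suc:
  assumes fin: "finite X"
  shows "SumC X (Suc m) w = (\<Sum>A\<in>Pow X. SumC (X - A) m (\<lambda>s. w (s(m := card A))))"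
proof -
  have "(\<Sum>A\<in>Pow X. SumC (X - A) m (\<lambda>s. w (s(m := card A)))) =
        (\<Sum>(A, \<psi>)\<in>Sigma (Pow X) (\<lambda>A. (X - A) \<rightarrow>\<^sub>E {..<m}). of_nat (w ((sz (X - A) \<psi>)(m := card A))))"
    unfolding SumC_def using fin by (intro sum.Sigma) (auto intro!: finite_PiE)
  also have "\<dots> = (\<Sum>\<phi>\<in>X \<rightarrow>\<^sub>E {..<Suc m}. of_nat (w (sz X \<phi>)))"
  proof (rule sum.reindex_bij_witness[where j="\<lambda>(A, \<psi>). (\<lambda>x. if x \<in> A then m else \<psi> x)"
        and i="\<lambda>\<phi>. ({x\<in>X. \<phi> x = m}, restrict \<phi> (X - {x\<in>X. \<phi> x = m}))"])
    fix a assume a: "a \<in> Sigma (Pow X) (\<lambda>A. (X - A) \<rightarrow>\<^sub>E {..<m})"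
    obtain A \<psi> where a': "a = (A, \<psi>)" "A \<subseteq> X" "\<psi> \<in> (X - A) \<rightarrow>\<^sub>E {..<m}" using a by auto
    have sA: "{x\<in>X. (if x \<in> A then m else \<psi> x) = m} = A" using a' by (auto simp: PiE_def Pi_def)
    show "(case case a of (A, \<psi>) \<Rightarrow> \<lambda>x. if x \<in> A then m else \<psi> x of
          \<phi> \<Rightarrow> ({x \<in> X. \<phi> x = m}, restrict \<phi> (X - {x \<in> X. \<phi> x = m}))) = a"
      using a' sA by (auto simp: PiE_def extensional_def)
    show "(case a of (A, \<psi>) \<Rightarrow> \<lambda>x. if x \<in> A then m else \<psi> x) \<in> X \<rightarrow>\<^sub>E {..<Suc m}"
      using a' by (auto simp: PiE_def Pi_def extensional_def)
    have "sz X (\<lambda>x. if x \<in> A then m else \<psi> x) = (sz (X - A) \<psi>)(m := card A)"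
    proof (rule ext)
      fix c
      show "sz X (\<lambda>x. if x \<in> A then m else \<psi> x) c = ((sz (X - A) \<psi>)(m := card A)) c"
      proof (cases "c = m")
        case True then show ?thesis using sA by (simp add: sz_def)
      next
        case False
        then have "{x\<in>X. (if x \<in> A then m else \<psi> x) = c} = {x\<in>X - A. \<psi> x = c}" by auto
        then show ?thesis using False by (simp add: sz_def)
      qed
    qed
    then show "of_nat (w (sz X (case a of (A, \<psi>) \<Rightarrow> \<lambda>x. if x \<in> A then m else \<psi> x))) =
         (case a of (A, \<psi>) \<Rightarrow> (of_nat (w ((sz (X - A) \<psi>)(m := card A))) :: rat))"
      using a' by simp
  next
    fix \<phi> assume \<phi>: "\<phi> \<in> X \<rightarrow>\<^sub>E {..<Suc m}"
    show "(case ({x \<in> X. \<phi> x = m}, restrict \<phi> (X - {x \<in> X. \<phi> x = m})) of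
          (A, \<psi>) \<Rightarrow> \<lambda>x. if x \<in> A then m else \<psi> x) = \<phi>"
      using \<phi> by (auto simp: PiE_def extensional_def)
    show "({x \<in> X. \<phi> x = m}, restrict \<phi> (X - {x \<in> X. \<phi> x = m})) \<in> Sigma (Pow X) (\<lambda>A. (X - A) \<rightarrow>\<^sub>E {..<m})"
      using \<phi> by (auto simp: PiE_def Pi_def less_Suc_eq)
  qed
  finally show ?thesis unfolding SumC_def by simp
qed

lemma sum_Pow_card:
  assumes "finite X"
  shows "(\<Sum>A\<in>Pow X. F (card A)) = (\<Sum>l\<le>card X. of_nat (card X choose l) * (F l :: rat))"
proof -
  have "(\<Sum>A\<in>Pow X. F (card A)) = (\<Sum>l\<in>{..card X}. \<Sum>A\<in>{A\<in>Pow X. card A = l}. F (card A))"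
    using assms by (intro sum.group[symmetric]) (auto intro: card_mono)
  also have "\<dots> = (\<Sum>l\<le>card X. of_nat (card X choose l) * F l)"
  proof (rule sum.cong[OF refl])
    fix l
    have "(\<Sum>A\<in>{A\<in>Pow X. card A = l}. F (card A)) = (\<Sum>A\<in>{A\<in>Pow X. card A = l}. F l)" by simp
    also have "\<dots> = of_nat (card {A\<in>Pow X. card A = l}) * F l" by simp
    also have "{A\<in>Pow X. card A = l} = {B. B \<subseteq> X \<and> card B = l}" by auto
    finally show "(\<Sum>A\<in>{A\<in>Pow X. card A = l}. F (card A)) = of_nat (card X choose l) * F l"
      using n_subsets[OF assms, of l] by simp
  qed
  finally show ?thesis .
qed

lemma Sseq_Suc:
  "Sseq (Suc m) w n = (\<Sum>l\<le>n. of_nat (n choose l) * Sseq m (\<lambda>s. w (s(m := l))) (n - l))"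
proof -
  have "Sseq (Suc m) w n = (\<Sum>A\<in>Pow {..<n}. SumC ({..<n} - A) m (\<lambda>s. w (s(m := card A))))"
    unfolding Sseq_def by (rule SumC_Suc) simp
  also have "\<dots> = (\<Sum>A\<in>Pow {..<n}. Sseq m (\<lambda>s. w (s(m := card A))) (n - card A))"
    by (rule sum.cong[OF refl]) (auto simp: SumC_card card_Diff_subset finite_subset)
  also have "\<dots> = (\<Sum>l\<le>n. of_nat (n choose l) * Sseq m (\<lambda>s. w (s(m := l))) (n - l))"
    using sum_Pow_card[of "{..<n}" "\<lambda>l. Sseq m (\<lambda>s. w (s(m := l))) (n - l)"] by simp
  finally show ?thesis .
qed

lemma Sseq_ES: "cellmono t m w \<Longrightarrow> Sseq m w \<in> ES"
proof (induction m arbitrary: w)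
  case 0
  have "(\<lambda>n. of_nat (w (\<lambda>_. 0)) * (if n = 0 then 1 else 0)) \<in> ES" by (intro ES.smul ES_delta)
  then show ?case by (simp add: Sseq_0)
next
  case (Suc m)
  define wl where "wl l = (\<lambda>s. w (s(m := l)))" for l
  have IH: "Sseq m (wl l) \<in> ES" for l unfolding wl_def by (rule Suc.IH, rule cellmono_slice, rule Suc.prems)
  define stab where "stab L \<longleftrightarrow> (\<forall>l\<ge>L. \<forall>s. w (s(m := l)) = w (s(m := L)))" for L
  have "\<exists>L. stab L" unfolding stab_def by (rule stabilize[OF Suc.prems])
  then obtain L where L: "stab L" by blast
  have wlL: "wl l = wl L" if "l \<ge> L" for l
  proof -
    have "w (s(m := l)) = w (s(m := L))" for s using L that unfolding stab_def by blast
    then show ?thesis unfolding wl_def by (intro ext)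
  qed
  define f where "f n l = of_nat (n choose l) * Sseq m (wl l) (n - l)" for n l
  define g where "g n l = of_nat (n choose l) * Sseq m (wl L) (n - l)" for n l
  have eq: "Sseq (Suc m) w n = (\<Sum>l<L. f n l - g n l) + (\<Sum>l\<le>n. g n l)" for n
  proof -
    have "Sseq (Suc m) w n = (\<Sum>l\<le>n. f n l)" unfolding Sseq_Suc f_def wl_def by simp
    also have "\<dots> = (\<Sum>l\<le>n. f n l - g n l) + (\<Sum>l\<le>n. g n l)" by (simp add: sum_subtractf)
    finally have calc: "Sseq (Suc m) w n = (\<Sum>l\<le>n. f n l - g n l) + (\<Sum>l\<le>n. g n l)" .
    have z: "f n l - g n l = 0" if "l \<ge> L \<or> l > n" for l
    proof (cases "l > n")
      case True then show ?thesis by (simp add: f_def g_def binomial_eq_0)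
    next
      case False then have "l \<ge> L" using that by simp
      then have "wl l = wl L" by (rule wlL)
      then show ?thesis by (simp add: f_def g_def)
    qed
    have "(\<Sum>l\<le>n. f n l - g n l) = (\<Sum>l\<in>{..n} \<union> {..<L}. f n l - g n l)"
      by (rule sum.mono_neutral_left) (use z in auto)
    also have "\<dots> = (\<Sum>l<L. f n l - g n l)"
      by (rule sum.mono_neutral_right) (use z in auto)
    finally have "(\<Sum>l\<le>n. f n l - g n l) = (\<Sum>l<L. f n l - g n l)" .
    then show "Sseq (Suc m) w n = (\<Sum>l<L. f n l - g n l) + (\<Sum>l\<le>n. g n l)"
      using calc by simp
  qed
  have "(\<lambda>n. (\<Sum>l<L. f n l - g n l) + (\<Sum>l\<le>n. g n l)) \<in> ES"
  proof (rule ES.add)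
    show "(\<lambda>n. \<Sum>l<L. f n l - g n l) \<in> ES"
      unfolding f_def g_def by (intro ES_sum ES_diff ES_shift IH) simp
    show "(\<lambda>n. \<Sum>l\<le>n. g n l) \<in> ES"
      unfolding g_def by (intro ES_transform' IH)
  qed
  then show ?case using eq by simp
qed

lemma transp_map_simps[simp]:
  "transp_map a b a = b" "transp_map a b b = a"
  "x \<noteq> a \<Longrightarrow> x \<noteq> b \<Longrightarrow> transp_map a b x = x"
  by (auto simp: transp_map_def)

lemma transp_map_same: "transp_map a a = (\<lambda>x. x)"
  by (auto simp: transp_map_def)

lemma transp_map_sym: "transp_map a b = transp_map b a"
  by (auto simp: transp_map_def)

lemma transp_map_commute:
  assumes "x \<noteq> a" "x \<noteq> b" "y \<noteq> a" "y \<noteq> b"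
  shows "transp_map x y (transp_map a b z) = transp_map a b (transp_map x y z)"
  using assms by (auto simp: transp_map_def)

lemma transp_map_bij: "a \<in> X \<Longrightarrow> b \<in> X \<Longrightarrow> bij_betw (transp_map a b) X X"
  by (rule bij_betwI[where g="transp_map a b"]) (auto simp: transp_map_def)

lemma iso_comp:
  assumes "is_iso R ar C f A B" "is_iso R ar C g B D"
  shows "is_iso R ar C (g \<circ> f) A D"
  unfolding is_iso_def
proof (intro conjI ballI allI impI)
  show "bij_betw (g \<circ> f) (carrier A) (carrier D)"
    using assms unfolding is_iso_def by (auto intro: bij_betw_trans)
next
  fix r xs assume r: "r \<in> R" and xs: "length xs = ar r \<and> set xs \<subseteq> carrier A"
  have fx: "set (map f xs) \<subseteq> carrier B" using assms(1) xs unfolding is_iso_def bij_betw_def by auto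
  have 1: "rel D r (map g (map f xs)) = rel B r (map f xs)"
    using assms(2) r fx xs unfolding is_iso_def by (metis length_map)
  have 2: "rel B r (map f xs) = rel A r xs" using assms(1) r xs unfolding is_iso_def by blast
  have 3: "map (g \<circ> f) xs = map g (map f xs)" by simp
  show "rel D r (map (g \<circ> f) xs) = rel A r xs" unfolding 3 1 2 ..

next
  fix c assume "c \<in> C"
  then show "cst D c = (g \<circ> f) (cst A c)" using assms unfolding is_iso_def by simp
qed

lemma iso_cong:
  assumes "wf_struc R ar C A" "is_iso R ar C f A B" "\<And>x. x \<in> carrier A \<Longrightarrow> f x = g x"
  shows "is_iso R ar C g A B"
  unfolding is_iso_def
proof (intro conjI ballI allI impI)
  show "bij_betw g (carrier A) (carrier B)"
    using assms(2,3) unfolding is_iso_def using bij_betw_cong by blast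
next
  fix r xs assume r: "r \<in> R" and xs: "length xs = ar r \<and> set xs \<subseteq> carrier A"
  have "map g xs = map f xs" using xs assms(3) by (auto intro: map_cong)
  moreover have "rel B r (map f xs) = rel A r xs" using assms(2) r xs unfolding is_iso_def by blast
  ultimately show "rel B r (map g xs) = rel A r xs" by metis
next
  fix c assume "c \<in> C"
  then show "cst B c = g (cst A c)" using assms unfolding is_iso_def wf_struc_def by auto
qed

lemma iso_inv:
  assumes "wf_struc R ar C A" "is_iso R ar C f A B"
  shows "is_iso R ar C (inv_into (carrier A) f) B A"
  unfolding is_iso_def
proof (intro conjI ballI allI impI)
  have bij: "bij_betw f (carrier A) (carrier B)" using assms(2) unfolding is_iso_def by simp
  then show "bij_betw (inv_into (carrier A) f) (carrier B) (carrier A)" by (rule bij_betw_inv_into)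
  fix r xs assume r: "r \<in> R" and xs: "length xs = ar r \<and> set xs \<subseteq> carrier B"
  define ys where "ys = map (inv_into (carrier A) f) xs"
  have ys: "length ys = ar r \<and> set ys \<subseteq> carrier A"
    using xs bij unfolding ys_def by (auto simp: bij_betw_def inv_into_into)
  have "map f ys = xs" using xs bij unfolding ys_def
    by (auto simp: bij_betw_def f_inv_into_f intro!: map_idI)
  then show "rel A r ys = rel B r xs" using assms(2) r ys unfolding is_iso_def by metis
next
  fix c assume c: "c \<in> C"
  have bij: "bij_betw f (carrier A) (carrier B)" using assms(2) unfolding is_iso_def by simp
  have "cst A c \<in> carrier A" using assms(1) c unfolding wf_struc_def by auto
  then show "cst A c = inv_into (carrier A) f (cst B c)"
    using assms(2) c bij unfolding is_iso_def by (auto simp: bij_betw_def inv_into_f_f)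
qed

lemma iso_id: "is_iso R ar C (\<lambda>x. x) M M"
  unfolding is_iso_def by (auto simp: bij_betw_def inj_on_def)

lemma iso_determines:
  assumes "wf_struc R ar C M1" "wf_struc R ar C M2" "carrier M1 = carrier M2"
    "is_iso R ar C f M1 N" "is_iso R ar C f M2 N"
  shows "M1 = M2"
proof (rule struc.equality)
  show "carrier M1 = carrier M2" by fact
  show "rel M1 = rel M2"
  proof (intro ext)
    fix r xs
    show "rel M1 r xs = rel M2 r xs"
    proof (cases "r \<in> R \<and> length xs = ar r \<and> set xs \<subseteq> carrier M1")
      case True
      then show ?thesis using assms(3-5) unfolding is_iso_def by metis
    next
      case False
      then show ?thesis using assms(1-3) unfolding wf_struc_def by metis
    qed
  qed
  show "cst M1 = cst M2"
  proof
    fix c show "cst M1 c = cst M2 c"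
    proof (cases "c \<in> C")
      case True
      have "f (cst M1 c) = f (cst M2 c)" using assms(4,5) True unfolding is_iso_def by metis
      moreover have "inj_on f (carrier M1)" using assms(4) unfolding is_iso_def bij_betw_def by simp
      moreover have "cst M1 c \<in> carrier M1" "cst M2 c \<in> carrier M1"
        using assms(1-3) True unfolding wf_struc_def by auto
      ultimately show ?thesis by (auto dest: inj_onD)
    next
      case False then show ?thesis using assms(1,2) unfolding wf_struc_def by simp
    qed
  qed
  show "struc.more M1 = struc.more M2" by simp
qed

lemma swap_equiv_iff:
  "(a, b) \<in> swap_equiv R ar C M \<longleftrightarrow> a \<in> carrier M \<and> b \<in> carrier M \<and> is_iso R ar C (transp_map a b) M M"
  by (simp add: swap_equiv_def)

lemma swap_equiv_equiv:
  assumes wf: "wf_struc R ar C M"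
  shows "equiv (carrier M) (swap_equiv R ar C M)"
proof (rule equivI)
  show "swap_equiv R ar C M \<subseteq> carrier M \<times> carrier M" by (auto simp: swap_equiv_def)
  show "refl_on (carrier M) (swap_equiv R ar C M)"
    unfolding refl_on_def swap_equiv_iff by (simp add: transp_map_same iso_id)
  show "sym (swap_equiv R ar C M)"
    unfolding sym_def swap_equiv_iff using transp_map_sym by metis
  show "trans (swap_equiv R ar C M)"
  proof (rule transI)
    fix a b c assume ab: "(a, b) \<in> swap_equiv R ar C M" and bc: "(b, c) \<in> swap_equiv R ar C M"
    show "(a, c) \<in> swap_equiv R ar C M"
    proof (cases "a = b \<or> b = c \<or> a = c")
      case True
      then show ?thesis using ab bc unfolding swap_equiv_iff by (auto simp: transp_map_same iso_id)
    next
      case False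
      have "is_iso R ar C (transp_map a b \<circ> (transp_map b c \<circ> transp_map a b)) M M"
        using ab bc unfolding swap_equiv_iff by (blast intro: iso_comp)
      moreover have "transp_map a b \<circ> (transp_map b c \<circ> transp_map a b) = transp_map a c"
        using False by (auto simp: transp_map_def)
      ultimately show ?thesis using ab bc unfolding swap_equiv_iff by simp
    qed
  qed
qed

lemma swap_equiv_const:
  assumes "(a, b) \<in> swap_equiv R ar C M" "c \<in> C" "cst M c = a"
  shows "b = a"
  using assms unfolding swap_equiv_iff is_iso_def by auto

lemma finite_wf:
  assumes "finite R" "finite C" "finite X"
  shows "finite {M. wf_struc R ar C M \<and> carrier M = X}"
proof -
  define A where "A = Max (insert 0 (ar ` R))"
  have arA: "r \<in> R \<Longrightarrow> ar r \<le> A" for r unfolding A_def using assms(1) by auto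
  define F where "F M = ({(r, xs). rel M r xs}, restrict (cst M) C)" for M :: "('a,'b) struc"
  let ?S = "{M. wf_struc R ar C M \<and> carrier M = X}"
  have "F ` ?S \<subseteq> Pow (R \<times> {xs. set xs \<subseteq> X \<and> length xs \<le> A}) \<times> (C \<rightarrow>\<^sub>E X)"
    unfolding F_def wf_struc_def using arA by fastforce
  moreover have "finite (Pow (R \<times> {xs. set xs \<subseteq> X \<and> length xs \<le> A}) \<times> (C \<rightarrow>\<^sub>E X))"
    using assms by (intro finite_SigmaI finite_Pow_iff[THEN iffD2] finite_cartesian_product finite_lists_length_le finite_PiE) auto
  ultimately have fin: "finite (F ` ?S)" by (rule finite_subset)
  have "inj_on F ?S"
  proof (rule inj_onI)
    fix M1 M2 assume M1: "M1 \<in> ?S" and M2: "M2 \<in> ?S" and eq: "F M1 = F M2"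
    show "M1 = M2"
    proof (rule struc.equality)
      show "carrier M1 = carrier M2" using M1 M2 by simp
      have "{(r, xs). rel M1 r xs} = {(r, xs). rel M2 r xs}" using eq unfolding F_def by simp
      then show "rel M1 = rel M2" by (intro ext) (metis (mono_tags, lifting) case_prodI mem_Collect_eq old.prod.case)
      have r: "restrict (cst M1) C = restrict (cst M2) C" using eq unfolding F_def by simp
      show "cst M1 = cst M2"
      proof
        fix c show "cst M1 c = cst M2 c"
          using M1 M2 r unfolding wf_struc_def by (cases "c \<in> C") (auto dest: fun_cong[where x=c])
      qed
      show "struc.more M1 = struc.more M2" by simp
    qed
  qed
  then show ?thesis using fin finite_imageD by blast
qed

definition kerS :: "nat set \<Rightarrow> (nat \<Rightarrow> nat) \<Rightarrow> (nat \<times> nat) set" where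
  "kerS X \<phi> = {(x, y). x \<in> X \<and> y \<in> X \<and> \<phi> x = \<phi> y}"

definition relabel :: "'c set \<Rightarrow> (nat \<Rightarrow> nat) \<Rightarrow> ('r, 'c) struc \<Rightarrow> ('r, 'c) struc" where
  "relabel C \<pi> M = \<lparr>carrier = \<pi> ` carrier M,
     rel = (\<lambda>r ys. set ys \<subseteq> \<pi> ` carrier M \<and> rel M r (map (inv_into (carrier M) \<pi>) ys)),
     cst = (\<lambda>c. if c \<in> C then \<pi> (cst M c) else 0)\<rparr>"

definition subst :: "nat set \<Rightarrow> ('r, 'c) struc \<Rightarrow> ('r, 'c) struc" where
  "subst X M = \<lparr>carrier = X, rel = (\<lambda>r xs. rel M r xs \<and> set xs \<subseteq> X), cst = cst M\<rparr>"

lemma wf_relabel: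
  assumes "wf_struc R ar C M" "inj_on \<pi> (carrier M)"
  shows "wf_struc R ar C (relabel C \<pi> M)"
  using assms unfolding wf_struc_def relabel_def by (auto dest!: spec[of _ "map _ _"] dest: spec)

lemma iso_relabel:
  assumes "wf_struc R ar C M" "inj_on \<pi> (carrier M)"
  shows "is_iso R ar C \<pi> M (relabel C \<pi> M)"
  unfolding is_iso_def
proof (intro conjI ballI allI impI)
  show "bij_betw \<pi> (carrier M) (carrier (relabel C \<pi> M))"
    using assms(2) by (simp add: relabel_def bij_betw_imageI)
  fix r xs assume "r \<in> R" "length xs = ar r \<and> set xs \<subseteq> carrier M"
  then have "map (inv_into (carrier M) \<pi>) (map \<pi> xs) = xs"
    using assms(2) by (auto intro!: map_idI simp: inv_into_f_f)
  then show "rel (relabel C \<pi> M) r (map \<pi> xs) = rel M r xs"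
    using \<open>length xs = ar r \<and> set xs \<subseteq> carrier M\<close> by (auto simp: relabel_def)
next
  fix c assume "c \<in> C" then show "cst (relabel C \<pi> M) c = \<pi> (cst M c)" by (simp add: relabel_def)
qed

lemma swap_transfer:
  assumes wA: "wf_struc R ar C A" and wB: "wf_struc R ar C B" and iso: "is_iso R ar C f A B"
    and ab: "(a, b) \<in> swap_equiv R ar C A"
  shows "(f a, f b) \<in> swap_equiv R ar C B"
proof -
  let ?g = "inv_into (carrier A) f"
  have bij: "bij_betw f (carrier A) (carrier B)" using iso unfolding is_iso_def by simp
  have a: "a \<in> carrier A" and b: "b \<in> carrier A" and t: "is_iso R ar C (transp_map a b) A A"
    using ab unfolding swap_equiv_iff by auto
  have "is_iso R ar C (f \<circ> (transp_map a b \<circ> ?g)) B B"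
    by (intro iso_comp[OF _ iso] iso_comp[OF iso_inv[OF wA iso] t])
  moreover have "(f \<circ> (transp_map a b \<circ> ?g)) y = transp_map (f a) (f b) y" if y: "y \<in> carrier B" for y
  proof -
    obtain x where x: "x \<in> carrier A" "y = f x" using y bij by (auto simp: bij_betw_def)
    have gx: "?g y = x" using x bij by (simp add: bij_betw_def inv_into_f_f)
    have inj: "inj_on f (carrier A)" using bij by (simp add: bij_betw_def)
    show ?thesis
    proof (cases "x = a \<or> x = b")
      case True then show ?thesis using gx x by auto
    next
      case False
      then have "f x \<noteq> f a" "f x \<noteq> f b" using inj x a b by (auto dest: inj_onD)
      then show ?thesis using gx x False by simp
    qed
  qed
  ultimately have "is_iso R ar C (transp_map (f a) (f b)) B B" by (rule iso_cong[OF wB])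
  moreover have "f a \<in> carrier B" "f b \<in> carrier B" using a b bij by (auto simp: bij_betw_def)
  ultimately show ?thesis unfolding swap_equiv_iff by simp
qed

lemma move_lemma:
  fixes X X' B :: "nat set" and A :: nat and \<phi> :: "nat \<Rightarrow> nat" and P :: "nat list \<Rightarrow> bool"
  assumes XX: "X \<subseteq> X'"
    and big: "\<And>x. x \<in> X' - X \<Longrightarrow> A + 2 \<le> card {y\<in>X. \<phi> y = \<phi> x}"
    and finX: "finite X"
    and finB: "finite B" and cardB: "card B \<le> 2" and BX: "B \<subseteq> X"
    and inv: "\<And>ys x y. set ys \<subseteq> X' \<Longrightarrow> length ys \<le> A \<Longrightarrow> x \<in> X' - X \<Longrightarrow> y \<in> X \<Longrightarrow> \<phi> x = \<phi> y
               \<Longrightarrow> x \<notin> B \<Longrightarrow> y \<notin> B \<Longrightarrow> y \<notin> set ys \<Longrightarrow> (P (map (transp_map x y) ys) \<longleftrightarrow> P ys)"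
    and base: "\<And>ys. set ys \<subseteq> X \<Longrightarrow> length ys \<le> A \<Longrightarrow> P ys"
  shows "set xs \<subseteq> X' \<Longrightarrow> length xs \<le> A \<Longrightarrow> P xs"
proof (induction "card (set xs - X)" arbitrary: xs rule: less_induct)
  case less
  show ?case
  proof (cases "set xs \<subseteq> X")
    case True then show ?thesis using base less.prems by blast
  next
    case False
    then obtain x where x: "x \<in> set xs" "x \<notin> X" by blast
    then have xX': "x \<in> X' - X" using less.prems by auto
    define F where "F = {y\<in>X. \<phi> y = \<phi> x}"
    have cF: "A + 2 \<le> card F" unfolding F_def using big[OF xX'] .
    have "\<exists>y\<in>F. y \<notin> set xs \<and> y \<notin> B"
    proof (rule ccontr)
      assume "\<not> ?thesis"
      then have "F \<subseteq> (set xs - {x}) \<union> B" unfolding F_def using x by auto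
      then have c1: "card F \<le> card ((set xs - {x}) \<union> B)" by (intro card_mono) (use finB in auto)
      have c2: "card ((set xs - {x}) \<union> B) \<le> card (set xs - {x}) + card B" by (rule card_Un_le)
      have c3: "card (set xs - {x}) + 1 = card (set xs)" 
      proof -
        have "card (set xs) > 0" using x by (auto simp: card_gt_0_iff)
        then show ?thesis using x by simp
      qed
      have c4: "card (set xs) \<le> length xs" by (rule card_length)
      show False using c1 c2 c3 c4 cF cardB less.prems(2) by linarith
    qed
    then obtain y where y: "y \<in> X" "\<phi> y = \<phi> x" "y \<notin> set xs" "y \<notin> B" unfolding F_def by blast
    have xB: "x \<notin> B"
    proof
      assume "x \<in> B"
      then show False using x BX by auto
    qed
    define ys where "ys = map (transp_map x y) xs"
    have xy: "x \<noteq> y" using x y by auto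
    have setys: "set ys = (set xs - {x}) \<union> {y}"
    proof -
      have "set ys = transp_map x y ` set xs" by (simp add: ys_def)
      also have "\<dots> = (set xs - {x}) \<union> {y}"
      proof (rule set_eqI)
        fix z
        show "z \<in> transp_map x y ` set xs \<longleftrightarrow> z \<in> (set xs - {x}) \<union> {y}"
        proof
          assume "z \<in> transp_map x y ` set xs"
          then obtain w where w: "w \<in> set xs" "z = transp_map x y w" by auto
          show "z \<in> (set xs - {x}) \<union> {y}" using w y(3) xy by (cases "w = x") (auto simp: transp_map_def)
        next
          assume z: "z \<in> (set xs - {x}) \<union> {y}"
          show "z \<in> transp_map x y ` set xs"
          proof (cases "z = y")
            case True then show ?thesis using x(1) by (intro image_eqI[of _ _ x]) simp_all
          next
            case False then have "z \<in> set xs" "z \<noteq> x" using z by auto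
            then show ?thesis using False by (intro image_eqI[of _ _ z]) simp_all
          qed
        qed
      qed
      finally show ?thesis .
    qed
    have "set ys - X = (set xs - X) - {x}" using setys y by auto
    moreover have "card ((set xs - X) - {x}) < card (set xs - X)"
      using x by (intro card_Diff1_less) auto
    ultimately have lt: "card (set ys - X) < card (set xs - X)" by simp
    have ys1: "set ys \<subseteq> X'" using setys less.prems XX y by auto
    have ys2: "length ys \<le> A" using less.prems by (simp add: ys_def)
    have "P ys" using less.hyps[OF lt ys1 ys2] .
    moreover have "P ys \<longleftrightarrow> P xs"
      unfolding ys_def by (rule inv[OF less.prems xX' y(1) y(2)[symmetric] xB y(4) y(3)])
    ultimately show ?thesis by simp
  qed
qed

lemma wf_subst:
  assumes "wf_struc R ar C M" "X \<subseteq> carrier M" "\<forall>c\<in>C. cst M c \<in> X"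
  shows "wf_struc R ar C (subst X M)"
  using assms unfolding wf_struc_def subst_def by auto

lemma substruc_subst:
  assumes "wf_struc R ar C M" "X \<subseteq> carrier M" "\<forall>c\<in>C. cst M c \<in> X"
  shows "substruc R ar C (subst X M) M"
  using assms wf_subst[OF assms] unfolding substruc_def by (auto simp: subst_def)

locale HP =
  fixes R :: "'r set" and ar :: "'r \<Rightarrow> nat" and C :: "'c set" and H :: "('r, 'c) struc set"
  assumes finR: "finite R" and finC: "finite C" and her: "hereditary R ar C H"
begin

definition G :: "nat set \<Rightarrow> (nat \<Rightarrow> nat) \<Rightarrow> nat" where
  "G X \<phi> = card {M\<in>H. carrier M = X \<and> swap_equiv R ar C M = kerS X \<phi>}"

lemma H_wf: "M \<in> H \<Longrightarrow> wf_struc R ar C M"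
  using her unfolding hereditary_def by blast

lemma H_iso: "M \<in> H \<Longrightarrow> wf_struc R ar C N \<Longrightarrow> is_iso R ar C f M N \<Longrightarrow> N \<in> H"
  using her unfolding hereditary_def by blast

lemma H_sub: "M \<in> H \<Longrightarrow> substruc R ar C N M \<Longrightarrow> N \<in> H"
  using her unfolding hereditary_def by blast

lemma finite_HX: "finite X \<Longrightarrow> finite {M\<in>H. carrier M = X \<and> P M}"
  by (rule finite_subset[OF _ finite_wf[OF finR finC, of X ar]]) (auto dest: H_wf)

lemma G_le:
  assumes finX: "finite X" and bij: "bij_betw \<pi> X Y" and psi: "\<And>x. x \<in> X \<Longrightarrow> \<psi> (\<pi> x) = \<phi> x"
  shows "G X \<phi> \<le> G Y \<psi>"
  unfolding G_def
proof (rule card_inj_on_le[where f="relabel C \<pi>"])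
  let ?SX = "{M\<in>H. carrier M = X \<and> swap_equiv R ar C M = kerS X \<phi>}"
  let ?SY = "{M\<in>H. carrier M = Y \<and> swap_equiv R ar C M = kerS Y \<psi>}"
  have finY: "finite Y" using bij finX bij_betw_finite by blast
  then show "finite ?SY" by (rule finite_HX)
  have inj: "inj_on \<pi> X" using bij by (simp add: bij_betw_def)
  show "inj_on (relabel C \<pi>) ?SX"
  proof (rule inj_onI)
    fix M1 M2 assume M1: "M1 \<in> ?SX" and M2: "M2 \<in> ?SX" and eq: "relabel C \<pi> M1 = relabel C \<pi> M2"
    have w1: "wf_struc R ar C M1" "wf_struc R ar C M2" using M1 M2 by (auto intro: H_wf)
    have c: "carrier M1 = X" "carrier M2 = X" using M1 M2 by auto
    have i1: "is_iso R ar C \<pi> M1 (relabel C \<pi> M1)" by (rule iso_relabel[OF w1(1)]) (use inj c in simp)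
    have i2: "is_iso R ar C \<pi> M2 (relabel C \<pi> M2)" by (rule iso_relabel[OF w1(2)]) (use inj c in simp)
    show "M1 = M2"
      by (rule iso_determines[OF w1(1) w1(2) _ i1]) (use c i2 eq in simp_all)
  qed
  show "relabel C \<pi> ` ?SX \<subseteq> ?SY"
  proof (rule image_subsetI)
    fix M assume MS: "M \<in> ?SX"
    then have M: "M \<in> H" "swap_equiv R ar C M = kerS X \<phi>" and cX: "carrier M = X" by auto
    let ?N = "relabel C \<pi> M"
    have wM: "wf_struc R ar C M" by (rule H_wf[OF M(1)])
    have injM: "inj_on \<pi> (carrier M)" using inj cX by simp
    have wN: "wf_struc R ar C ?N" by (rule wf_relabel[OF wM injM])
    have iN: "is_iso R ar C \<pi> M ?N" by (rule iso_relabel[OF wM injM])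
    have NH: "?N \<in> H" by (rule H_iso[OF M(1) wN iN])
    have cN: "carrier ?N = Y" using bij cX by (simp add: relabel_def bij_betw_def)
    let ?g = "inv_into X \<pi>"
    have ig: "is_iso R ar C ?g ?N M" using iso_inv[OF wM iN] cX by simp
    have gY: "y \<in> Y \<Longrightarrow> ?g y \<in> X \<and> \<pi> (?g y) = y" for y
      using bij by (auto simp: bij_betw_def inv_into_into f_inv_into_f)
    have psig: "y \<in> Y \<Longrightarrow> \<psi> y = \<phi> (?g y)" for y using gY psi by metis
    have sw: "swap_equiv R ar C ?N = kerS Y \<psi>"
    proof (rule set_eqI, rule iffI)
      fix p assume p: "p \<in> swap_equiv R ar C ?N"
      obtain y1 y2 where p': "p = (y1, y2)" by (cases p)
      have "y1 \<in> Y" "y2 \<in> Y" using p p' cN by (auto simp: swap_equiv_def)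
      moreover have "(?g y1, ?g y2) \<in> swap_equiv R ar C M"
        using swap_transfer[OF wN wM ig] p p' by simp
      ultimately show "p \<in> kerS Y \<psi>" using M(2) p' psig by (auto simp: kerS_def)
    next
      fix p assume p: "p \<in> kerS Y \<psi>"
      obtain y1 y2 where p': "p = (y1, y2)" by (cases p)
      have y: "y1 \<in> Y" "y2 \<in> Y" "\<psi> y1 = \<psi> y2" using p p' by (auto simp: kerS_def)
      then have "(?g y1, ?g y2) \<in> swap_equiv R ar C M" using M(2) gY psig by (auto simp: kerS_def)
      then have "(\<pi> (?g y1), \<pi> (?g y2)) \<in> swap_equiv R ar C ?N" by (rule swap_transfer[OF wM wN iN])
      then show "p \<in> swap_equiv R ar C ?N" using gY y p' by simp
    qed
    show "?N \<in> ?SY" using NH cN sw by simp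
  qed
qed

lemma G_eq:
  assumes finX: "finite X" and bij: "bij_betw \<pi> X Y" and psi: "\<And>x. x \<in> X \<Longrightarrow> \<psi> (\<pi> x) = \<phi> x"
  shows "G X \<phi> = G Y \<psi>"
proof (rule antisym)
  show "G X \<phi> \<le> G Y \<psi>" by (rule G_le[OF finX bij]) (rule psi)
  have finY: "finite Y" using bij finX bij_betw_finite by blast
  have bij': "bij_betw (inv_into X \<pi>) Y X" using bij by (rule bij_betw_inv_into)
  have "\<phi> (inv_into X \<pi> y) = \<psi> y" if "y \<in> Y" for y
    using psi[of "inv_into X \<pi> y"] that bij by (auto simp: bij_betw_def inv_into_into f_inv_into_f)
  then show "G Y \<psi> \<le> G X \<phi>" by (intro G_le[OF finY bij'])
qed

end

lemma iso_relD:
  "is_iso R ar C f A B \<Longrightarrow> r \<in> R \<Longrightarrow> length xs = ar r \<Longrightarrow> set xs \<subseteq> carrier A \<Longrightarrow> rel B r (map f xs) = rel A r xs"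
  unfolding is_iso_def by blast

lemma transp_map_in: "a \<in> X \<Longrightarrow> b \<in> X \<Longrightarrow> z \<in> X \<Longrightarrow> transp_map a b z \<in> X"
  by (auto simp: transp_map_def)

lemma card_two_le: "card {a, b} \<le> 2"
  by (cases "a = b") auto

context HP
begin

lemma G_mono:
  assumes finX': "finite X'" and XX: "X \<subseteq> X'"
    and big: "\<And>x. x \<in> X' - X \<Longrightarrow> A + 2 \<le> card {y\<in>X. \<phi> y = \<phi> x}"
    and arA: "\<And>r. r \<in> R \<Longrightarrow> ar r \<le> A"
  shows "G X' \<phi> \<le> G X \<phi>"
  unfolding G_def
proof (rule card_inj_on_le[where f="subst X"])
  let ?S' = "{M\<in>H. carrier M = X' \<and> swap_equiv R ar C M = kerS X' \<phi>}"
  let ?S = "{M\<in>H. carrier M = X \<and> swap_equiv R ar C M = kerS X \<phi>}"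
  have finX: "finite X" using finX' XX finite_subset by blast
  show "finite ?S" by (rule finite_HX[OF finX])
  have cstX: "\<forall>c\<in>C. cst M c \<in> X" if M: "M \<in> ?S'" for M
  proof
    fix c assume c: "c \<in> C"
    have wM: "wf_struc R ar C M" using M H_wf by blast
    have a: "cst M c \<in> X'" using wM c M unfolding wf_struc_def by auto
    show "cst M c \<in> X"
    proof (rule ccontr)
      assume na: "cst M c \<notin> X"
      then have "A + 2 \<le> card {y\<in>X. \<phi> y = \<phi> (cst M c)}" using big a by auto
      then have "{y\<in>X. \<phi> y = \<phi> (cst M c)} \<noteq> {}" by (metis add_2_eq_Suc' card.empty not_less_eq_eq zero_le)
      then obtain y where y: "y \<in> X" "\<phi> y = \<phi> (cst M c)" by auto
      then have "(cst M c, y) \<in> swap_equiv R ar C M" using M a XX by (auto simp: kerS_def)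
      then have "y = cst M c" by (rule swap_equiv_const) (use c in auto)
      then show False using y na by simp
    qed
  qed
  have auto_kernel: "is_iso R ar C (transp_map x y) M M"
    if "M \<in> ?S'" "x \<in> X'" "y \<in> X'" "\<phi> x = \<phi> y" for M x y
  proof -
    have "(x, y) \<in> swap_equiv R ar C M" using that by (auto simp: kerS_def)
    then show ?thesis unfolding swap_equiv_iff by simp
  qed
  show "inj_on (subst X) ?S'"
  proof (rule inj_onI)
    fix M1 M2 assume M1: "M1 \<in> ?S'" and M2: "M2 \<in> ?S'" and eq: "subst X M1 = subst X M2"
    have w1: "wf_struc R ar C M1" and w2: "wf_struc R ar C M2" using M1 M2 H_wf by auto
    have c1: "carrier M1 = X'" and c2: "carrier M2 = X'" using M1 M2 by auto
    show "M1 = M2"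
    proof (rule struc.equality)
      show "carrier M1 = carrier M2" using c1 c2 by simp
      show "cst M1 = cst M2" using arg_cong[OF eq, of cst] by (simp add: subst_def)
      show "struc.more M1 = struc.more M2" by simp
      show "rel M1 = rel M2"
      proof (intro ext)
        fix r xs
        show "rel M1 r xs = rel M2 r xs"
        proof (cases "r \<in> R \<and> length xs = ar r \<and> set xs \<subseteq> X'")
          case False
          then show ?thesis using w1 w2 c1 c2 unfolding wf_struc_def by metis
        next
          case True
          then have r: "r \<in> R" by simp
          let ?P = "\<lambda>ys. length ys = ar r \<longrightarrow> (rel M1 r ys \<longleftrightarrow> rel M2 r ys)"
          have "?P xs"
          proof (rule move_lemma[of X X' A \<phi> "{}" ?P xs])
            show "X \<subseteq> X'" by fact
            show "\<And>x. x \<in> X' - X \<Longrightarrow> A + 2 \<le> card {y \<in> X. \<phi> y = \<phi> x}" by (rule big)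
            show "finite X" by fact
          next
            fix ys x y assume ys: "set ys \<subseteq> X'" and x: "x \<in> X' - X" and y: "y \<in> X" and xy: "\<phi> x = \<phi> y"
            have i1: "is_iso R ar C (transp_map x y) M1 M1" using auto_kernel[OF M1, of x y] x y xy XX by auto
            have i2: "is_iso R ar C (transp_map x y) M2 M2" using auto_kernel[OF M2, of x y] x y xy XX by auto
            show "?P (map (transp_map x y) ys) \<longleftrightarrow> ?P ys"
              using iso_relD[OF i1 r, of ys] iso_relD[OF i2 r, of ys] ys c1 c2 by auto
          next
            fix ys assume ys: "set ys \<subseteq> X"
            have "rel (subst X M1) r ys = rel (subst X M2) r ys" using eq by simp
            then show "?P ys" using ys by (simp add: subst_def)
          next
            show "set xs \<subseteq> X'" using True by simp
            show "length xs \<le> A" using True arA by simp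
          qed auto
          then show ?thesis using True by simp
        qed
      qed
    qed
  qed
  show "subst X ` ?S' \<subseteq> ?S"
  proof (rule image_subsetI)
    fix M assume MS: "M \<in> ?S'"
    have wM: "wf_struc R ar C M" using MS H_wf by blast
    have cM: "carrier M = X'" using MS by simp
    have swM: "swap_equiv R ar C M = kerS X' \<phi>" using MS by simp
    let ?N = "subst X M"
    have sub: "substruc R ar C ?N M" using substruc_subst[OF wM _ cstX[OF MS]] cM XX by simp
    have NH: "?N \<in> H" using H_sub[OF _ sub] MS by simp
    have cN: "carrier ?N = X" by (simp add: subst_def)
    have sw: "swap_equiv R ar C ?N = kerS X \<phi>"
    proof (rule set_eqI, rule iffI)
      fix p assume p: "p \<in> kerS X \<phi>"
      obtain a b where p': "p = (a, b)" by (cases p)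
      have ab: "a \<in> X" "b \<in> X" "\<phi> a = \<phi> b" using p p' by (auto simp: kerS_def)
      have iM: "is_iso R ar C (transp_map a b) M M" using auto_kernel[OF MS, of a b] ab XX by auto
      have "is_iso R ar C (transp_map a b) ?N ?N"
        unfolding is_iso_def
      proof (intro conjI ballI allI impI)
        show "bij_betw (transp_map a b) (carrier ?N) (carrier ?N)" using ab cN by (simp add: transp_map_bij)
      next
        fix r xs assume r: "r \<in> R" and xs: "length xs = ar r \<and> set xs \<subseteq> carrier ?N"
        have "set (map (transp_map a b) xs) \<subseteq> X" using xs ab cN by (auto intro: transp_map_in)
        moreover have "rel M r (map (transp_map a b) xs) = rel M r xs"
          using iso_relD[OF iM r, of xs] xs cN cM XX by auto
        ultimately show "rel ?N r (map (transp_map a b) xs) = rel ?N r xs"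
          using xs cN by (simp add: subst_def)
      next
        fix c assume "c \<in> C"
        then show "cst ?N c = transp_map a b (cst ?N c)" using iM unfolding is_iso_def by (simp add: subst_def)
      qed
      then show "p \<in> swap_equiv R ar C ?N" using ab p' cN by (simp add: swap_equiv_iff)
    next
      fix p assume p: "p \<in> swap_equiv R ar C ?N"
      obtain a b where p': "p = (a, b)" by (cases p)
      have ab: "a \<in> X" "b \<in> X" and iN: "is_iso R ar C (transp_map a b) ?N ?N"
        using p p' cN by (auto simp: swap_equiv_iff)
      have abX': "a \<in> X'" "b \<in> X'" using ab XX by auto
      have "is_iso R ar C (transp_map a b) M M"
        unfolding is_iso_def
      proof (intro conjI ballI allI impI)
        show "bij_betw (transp_map a b) (carrier M) (carrier M)" using abX' cM by (simp add: transp_map_bij)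
      next
        fix c assume "c \<in> C"
        then show "cst M c = transp_map a b (cst M c)" using iN unfolding is_iso_def by (simp add: subst_def)
      next
        fix r xs assume r: "r \<in> R" and xs: "length xs = ar r \<and> set xs \<subseteq> carrier M"
        let ?P = "\<lambda>ys. length ys = ar r \<longrightarrow> (rel M r (map (transp_map a b) ys) \<longleftrightarrow> rel M r ys)"
        have "?P xs"
        proof (rule move_lemma[of X X' A \<phi> "{a, b}" ?P xs])
          show "X \<subseteq> X'" by fact
          show "\<And>x. x \<in> X' - X \<Longrightarrow> A + 2 \<le> card {y \<in> X. \<phi> y = \<phi> x}" by (rule big)
          show "finite X" by fact
          show "finite {a, b}" by simp
          show "card {a, b} \<le> 2" by (rule card_two_le)
          show "{a, b} \<subseteq> X" using ab by simp
        next
          fix ys x y assume ys: "set ys \<subseteq> X'" and x: "x \<in> X' - X" and y: "y \<in> X" and xy: "\<phi> x = \<phi> y"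
            and xB: "x \<notin> {a, b}" and yB: "y \<notin> {a, b}"
          have iT: "is_iso R ar C (transp_map x y) M M" using auto_kernel[OF MS, of x y] x y xy XX by auto
          have comm: "map (transp_map a b) (map (transp_map x y) ys) = map (transp_map x y) (map (transp_map a b) ys)"
            using xB yB by (simp add: transp_map_commute)
          have sy: "set (map (transp_map a b) ys) \<subseteq> X'" using ys abX' by (auto intro: transp_map_in)
          show "?P (map (transp_map x y) ys) \<longleftrightarrow> ?P ys"
          proof (cases "length ys = ar r")
            case True
            have e1: "rel M r (map (transp_map x y) ys) = rel M r ys"
              using iso_relD[OF iT r True] ys cM by simp
            have e2: "rel M r (map (transp_map x y) (map (transp_map a b) ys)) = rel M r (map (transp_map a b) ys)"
              using iso_relD[OF iT r, of "map (transp_map a b) ys"] True sy cM by simp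
            have e3: "rel M r (map (transp_map a b) (map (transp_map x y) ys)) = rel M r (map (transp_map a b) ys)"
              unfolding comm by (rule e2)
            show ?thesis by (simp del: map_map add: e1 e3)
          next
            case False then show ?thesis by simp
          qed
        next
          fix ys assume ys: "set ys \<subseteq> X"
          show "?P ys"
          proof
            assume l: "length ys = ar r"
            have sy: "set (map (transp_map a b) ys) \<subseteq> X" using ys ab by (auto intro: transp_map_in)
            have "rel ?N r (map (transp_map a b) ys) = rel ?N r ys"
              using iso_relD[OF iN r l] ys cN by simp
            then show "rel M r (map (transp_map a b) ys) = rel M r ys"
              using sy ys by (simp add: subst_def)
          qed
        next
          show "set xs \<subseteq> X'" using xs cM by simp
          show "length xs \<le> A" using xs r arA by simp
        qed
        then show "rel M r (map (transp_map a b) xs) = rel M r xs" using xs by simp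
      qed
      then have "(a, b) \<in> swap_equiv R ar C M" using abX' cM by (simp add: swap_equiv_iff)
      then show "p \<in> kerS X \<phi>" using swM ab p' by (auto simp: kerS_def)
    qed
    show "?N \<in> ?S" using NH cN sw by simp
  qed
qed

end

definition Xc :: "nat \<Rightarrow> (nat \<Rightarrow> nat) \<Rightarrow> nat set" where
  "Xc m s = prod_encode ` (SIGMA c:{..<m}. {..<s c})"

definition phic :: "nat \<Rightarrow> nat" where
  "phic x = fst (prod_decode x)"

lemma finite_Xc: "finite (Xc m s)"
  unfolding Xc_def by (intro finite_imageI finite_SigmaI) auto

lemma Xc_fiber:
  assumes "c < m"
  shows "card {y\<in>Xc m s. phic y = c} = s c"
proof -
  have "{y\<in>Xc m s. phic y = c} = prod_encode ` ({c} \<times> {..<s c})"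
    using assms by (auto simp: Xc_def phic_def)
  then show ?thesis by (simp add: card_image inj_prod_encode card_cartesian_product)
qed

lemma Xc_mono: "le_t t m s s' \<Longrightarrow> Xc m s \<subseteq> Xc m s'"
  unfolding Xc_def le_t_def by (auto intro!: image_mono)

context HP
begin

definition g :: "nat \<Rightarrow> (nat \<Rightarrow> nat) \<Rightarrow> nat" where
  "g m s = G (Xc m s) phic"

definition wt :: "nat \<Rightarrow> (nat \<Rightarrow> nat) \<Rightarrow> nat" where
  "wt m s = (if \<forall>c<m. 1 \<le> s c then g m s else 0)"

lemma g_mono:
  assumes arA: "\<And>r. r \<in> R \<Longrightarrow> ar r \<le> A" and le: "le_t (A + 2) m s s'"
  shows "g m s' \<le> g m s"
  unfolding g_def
proof (rule G_mono[OF finite_Xc Xc_mono[OF le] _ arA])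
  fix x assume x: "x \<in> Xc m s' - Xc m s"
  then obtain c i where ci: "x = prod_encode (c, i)" "c < m" "i < s' c" "\<not> i < s c"
    unfolding Xc_def by auto
  then have "s c \<noteq> s' c" by auto
  then have "A + 2 \<le> s c" using le ci(2) unfolding le_t_def by auto
  moreover have "phic x = c" using ci by (simp add: phic_def)
  ultimately show "A + 2 \<le> card {y \<in> Xc m s. phic y = phic x}" using Xc_fiber[OF ci(2)] by simp
qed

lemma wt_cellmono:
  assumes arA: "\<And>r. r \<in> R \<Longrightarrow> ar r \<le> A"
  shows "cellmono (A + 2) m (wt m)"
  unfolding cellmono_def
proof (intro allI impI)
  fix s s' assume le: "le_t (A + 2) m s s'"
  show "wt m s' \<le> wt m s"
  proof (cases "\<forall>c<m. 1 \<le> s' c")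
    case True
    then have "\<forall>c<m. 1 \<le> s c" using le unfolding le_t_def by fastforce
    then show ?thesis using True g_mono[OF arA le] by (simp add: wt_def)
  next
    case False
    then have "wt m s' = 0" unfolding wt_def by auto
    then show ?thesis by simp
  qed
qed

lemma G_coloring:
  assumes finX: "finite X" and im: "\<phi> ` X \<subseteq> {..<m}"
  shows "G X \<phi> = g m (sz X \<phi>)"
proof -
  define F where "F c = {x\<in>X. \<phi> x = c}" for c
  have "\<forall>c. \<exists>hc. bij_betw hc (F c) {0..<card (F c)}"
    using finX by (auto simp: F_def intro: ex_bij_betw_finite_nat)
  then obtain h where h: "\<And>c. bij_betw (h c) (F c) {0..<card (F c)}" by metis
  define \<pi> where "\<pi> x = prod_encode (\<phi> x, h (\<phi> x) x)" for x
  have szF: "sz X \<phi> c = card (F c)" for c by (simp add: sz_def F_def)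
  have bij: "bij_betw \<pi> X (Xc m (sz X \<phi>))"
    unfolding bij_betw_def
  proof
    show "inj_on \<pi> X"
    proof (rule inj_onI)
      fix x x' assume x: "x \<in> X" and x': "x' \<in> X" and eq: "\<pi> x = \<pi> x'"
      then have c: "\<phi> x = \<phi> x'" and hh: "h (\<phi> x) x = h (\<phi> x) x'" by (auto simp: \<pi>_def)
      have "x \<in> F (\<phi> x)" "x' \<in> F (\<phi> x)" using x x' c by (auto simp: F_def)
      then show "x = x'" using h[of "\<phi> x"] hh by (auto simp: bij_betw_def dest: inj_onD)
    qed
    show "\<pi> ` X = Xc m (sz X \<phi>)"
    proof (rule set_eqI, rule iffI)
      fix y assume "y \<in> \<pi> ` X"
      then obtain x where x: "x \<in> X" "y = \<pi> x" by auto
      have "x \<in> F (\<phi> x)" using x by (simp add: F_def)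
      then have "h (\<phi> x) x < card (F (\<phi> x))" using h[of "\<phi> x"] by (auto simp: bij_betw_def)
      moreover have "\<phi> x < m" using im x by auto
      ultimately show "y \<in> Xc m (sz X \<phi>)" using x szF by (auto simp: Xc_def \<pi>_def)
    next
      fix y assume "y \<in> Xc m (sz X \<phi>)"
      then obtain c i where ci: "y = prod_encode (c, i)" "c < m" "i < card (F c)"
        unfolding Xc_def szF by auto
      then have "i \<in> h c ` F c" using h[of c] by (auto simp: bij_betw_def)
      then obtain x where x: "x \<in> F c" "h c x = i" by auto
      then have "x \<in> X" "\<phi> x = c" by (auto simp: F_def)
      then show "y \<in> \<pi> ` X" using ci x by (intro image_eqI[of _ _ x]) (auto simp: \<pi>_def)
    qed
  qed
  have "G X \<phi> = G (Xc m (sz X \<phi>)) phic"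
    by (rule G_eq[OF finX bij]) (simp add: \<pi>_def phic_def)
  then show ?thesis by (simp add: g_def)
qed

end

lemma quotient_kerS:
  assumes "kerS X \<phi> = E"
  shows "X // E = (\<lambda>v. {x\<in>X. \<phi> x = v}) ` (\<phi> ` X)"
proof -
  have "E``{x} = {y\<in>X. \<phi> y = \<phi> x}" if "x \<in> X" for x
    using assms that by (auto simp: kerS_def)
  then show ?thesis unfolding quotient_def by auto
qed

lemma card_quotient_kerS:
  assumes "kerS X \<phi> = E"
  shows "card (X // E) = card (\<phi> ` X)"
proof -
  have "inj_on (\<lambda>v. {x\<in>X. \<phi> x = v}) (\<phi> ` X)"
  proof (rule inj_onI)
    fix v1 v2 assume v1: "v1 \<in> \<phi> ` X" and v2: "v2 \<in> \<phi> ` X" and eq: "{x\<in>X. \<phi> x = v1} = {x\<in>X. \<phi> x = v2}"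
    obtain x where "x \<in> X" "\<phi> x = v1" using v1 by auto
    then have "x \<in> {x\<in>X. \<phi> x = v2}" using eq by blast
    then show "v1 = v2" using \<open>\<phi> x = v1\<close> by simp
  qed
  then show ?thesis unfolding quotient_kerS[OF assms] by (rule card_image)
qed

lemma count_colorings:
  assumes finX: "finite X" and eqv: "equiv X E"
  shows "card {\<phi>\<in>X \<rightarrow>\<^sub>E {..<m}. \<phi> ` X = {..<m} \<and> kerS X \<phi> = E} = (if card (X // E) = m then fact m else 0)"
proof -
  let ?S = "{\<phi>\<in>X \<rightarrow>\<^sub>E {..<m}. \<phi> ` X = {..<m} \<and> kerS X \<phi> = E}"
  have EX: "E \<subseteq> X \<times> X" using eqv by (simp add: equiv_def)
  have main: "card (X // E) = m \<and> card ?S = fact m" if phi0: "\<phi>0 \<in> ?S" for \<phi>0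
  proof
    have P0: "\<phi>0 \<in> X \<rightarrow>\<^sub>E {..<m}" "\<phi>0 ` X = {..<m}" "kerS X \<phi>0 = E" using phi0 by auto
    show "card (X // E) = m" using card_quotient_kerS[OF P0(3)] P0(2) by simp
    define sel where "sel v = (SOME x. x \<in> X \<and> \<phi>0 x = v)" for v
    have sel: "sel v \<in> X \<and> \<phi>0 (sel v) = v" if "v < m" for v
    proof -
      have "\<exists>x. x \<in> X \<and> \<phi>0 x = v" using P0(2) that by (metis imageE lessThan_iff)
      then show ?thesis unfolding sel_def by (rule someI_ex)
    qed
    have K: "\<psi> x = \<psi> (sel (\<phi>0 x))" if "\<psi> \<in> ?S" "x \<in> X" for \<psi> x
    proof -
      have "\<phi>0 x < m" using P0(1) that(2) by auto
      then have "(sel (\<phi>0 x), x) \<in> kerS X \<phi>0" using sel that(2) by (auto simp: kerS_def)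
      then have "(sel (\<phi>0 x), x) \<in> kerS X \<psi>" using P0(3) that(1) by simp
      then show ?thesis by (simp add: kerS_def)
    qed
    define f where "f p = restrict (p \<circ> \<phi>0) X" for p :: "nat \<Rightarrow> nat"
    define f' where "f' \<psi> = (\<lambda>v. if v < m then \<psi> (sel v) else v)" for \<psi> :: "nat \<Rightarrow> nat"
    have "bij_betw f {p. p permutes {..<m}} ?S"
    proof (rule bij_betw_byWitness[where f'=f'])
      show "\<forall>p\<in>{p. p permutes {..<m}}. f' (f p) = p"
      proof
        fix p assume p: "p \<in> {p. p permutes {..<m}}"
        show "f' (f p) = p"
        proof
          fix v show "f' (f p) v = p v"
          proof (cases "v < m")
            case True then show ?thesis using sel[OF True] by (simp add: f'_def f_def)
          next
            case False then show ?thesis using p by (simp add: f'_def permutes_def)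
          qed
        qed
      qed
      show "\<forall>\<psi>\<in>?S. f (f' \<psi>) = \<psi>"
      proof
        fix \<psi> assume psi: "\<psi> \<in> ?S"
        show "f (f' \<psi>) = \<psi>"
        proof
          fix x show "f (f' \<psi>) x = \<psi> x"
          proof (cases "x \<in> X")
            case True
            then have "\<phi>0 x < m" using P0(1) by auto
            then show ?thesis using True K[OF psi True] by (simp add: f_def f'_def)
          next
            case False then show ?thesis using psi by (simp add: f_def PiE_def extensional_def)
          qed
        qed
      qed
      show "f ` {p. p permutes {..<m}} \<subseteq> ?S"
      proof (rule image_subsetI)
        fix p assume "p \<in> {p. p permutes {..<m}}"
        then have p: "p permutes {..<m}" by simp
        have c1: "f p \<in> X \<rightarrow>\<^sub>E {..<m}" using P0(1) permutes_in_image[OF p]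
          by (auto simp: f_def PiE_def Pi_def)
        have c2: "f p ` X \<subseteq> {..<m}" using P0(1) permutes_in_image[OF p] by (auto simp: f_def PiE_def Pi_def)
        have c3: "v \<in> f p ` X" if "v \<in> {..<m}" for v
        proof -
          have "v \<in> p ` {..<m}" using permutes_image[OF p] that by simp
          then obtain u where u: "u < m" "v = p u" by auto
          then show ?thesis using sel[OF u(1)] by (intro image_eqI[of _ _ "sel u"]) (auto simp: f_def)
        qed
        have "kerS X (f p) = kerS X \<phi>0"
          using permutes_inj[OF p] by (auto simp: kerS_def f_def inj_eq)
        then have c4: "kerS X (f p) = E" using P0(3) by simp
        have "f p ` X = {..<m}" using c2 c3 by blast
        then show "f p \<in> ?S" using c1 c4 by simp
      qed
      show "f' ` ?S \<subseteq> {p. p permutes {..<m}}"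
      proof (rule image_subsetI)
        fix \<psi> assume psi: "\<psi> \<in> ?S"
        have im1: "f' \<psi> ` {..<m} \<subseteq> {..<m}"
          using psi sel by (auto simp: f'_def PiE_def Pi_def)
        have im2: "{..<m} \<subseteq> f' \<psi> ` {..<m}"
        proof
          fix w assume "w \<in> {..<m}"
          then obtain x where x: "x \<in> X" "\<psi> x = w" using psi by (metis (mono_tags, lifting) imageE mem_Collect_eq)
          have "\<phi>0 x < m" using P0(1) x by auto
          moreover have "f' \<psi> (\<phi>0 x) = w" using K[OF psi x(1)] x \<open>\<phi>0 x < m\<close> by (simp add: f'_def)
          ultimately show "w \<in> f' \<psi> ` {..<m}" by (metis image_eqI lessThan_iff)
        qed
        have im: "f' \<psi> ` {..<m} = {..<m}" using im1 im2 by blast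
        have "inj_on (f' \<psi>) {..<m}" by (rule eq_card_imp_inj_on) (simp_all add: im)
        then have "bij_betw (f' \<psi>) {..<m} {..<m}" using im by (simp add: bij_betw_def)
        then have "f' \<psi> permutes {..<m}" by (rule bij_imp_permutes) (simp add: f'_def)
        then show "f' \<psi> \<in> {p. p permutes {..<m}}" by simp
      qed
    qed
    then have "card ?S = card {p. p permutes {..<m}}" by (simp add: bij_betw_same_card)
    also have "\<dots> = fact m" by (rule card_permutations) simp_all
    finally show "card ?S = fact m" .
  qed
  show ?thesis
  proof (cases "?S = {}")
    case False
    then obtain \<phi>0 where "\<phi>0 \<in> ?S" by blast
    then show ?thesis using main by auto
  next
    case True
    have "card (X // E) \<noteq> m"
    proof
      assume cq: "card (X // E) = m"
      have finQ: "finite (X // E)" using finX EX by (rule finite_quotient)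
      obtain \<beta> where \<beta>: "bij_betw \<beta> (X // E) {0..<m}" using ex_bij_betw_finite_nat[OF finQ] cq by auto
      define \<phi>0 where "\<phi>0 = restrict (\<lambda>x. \<beta> (E``{x})) X"
      have \<beta>in: "\<beta> (E``{x}) < m" if x: "x \<in> X" for x
      proof -
        have "E``{x} \<in> X // E" using x by (rule quotientI)
        then have "\<beta> (E``{x}) \<in> {0..<m}" using \<beta> unfolding bij_betw_def by blast
        then show ?thesis by simp
      qed
      have c1: "\<phi>0 \<in> X \<rightarrow>\<^sub>E {..<m}" using \<beta>in by (auto simp: \<phi>0_def)
      have c2: "\<phi>0 x \<in> {..<m}" if "x \<in> X" for x using \<beta>in that by (auto simp: \<phi>0_def)
      have c3: "v \<in> \<phi>0 ` X" if "v \<in> {..<m}" for v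
      proof -
        have "v \<in> \<beta> ` (X // E)" using \<beta> that by (auto simp: bij_betw_def)
        then obtain Q where Q: "Q \<in> X // E" "v = \<beta> Q" by auto
        then obtain x where "x \<in> X" "Q = E``{x}" by (auto elim: quotientE)
        then show ?thesis using Q by (intro image_eqI[of _ _ x]) (auto simp: \<phi>0_def)
      qed
      have c4: "kerS X \<phi>0 = E"
      proof (rule set_eqI)
        fix p :: "nat \<times> nat"
        obtain x y where p: "p = (x, y)" by (cases p)
        have injb: "inj_on \<beta> (X // E)" using \<beta> by (simp add: bij_betw_def)
        have "(x, y) \<in> kerS X \<phi>0 \<longleftrightarrow> x \<in> X \<and> y \<in> X \<and> E``{x} = E``{y}"
        proof
          assume "(x, y) \<in> kerS X \<phi>0"
          then have xy: "x \<in> X" "y \<in> X" "\<beta> (E``{x}) = \<beta> (E``{y})" by (auto simp: kerS_def \<phi>0_def)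
          then have "E``{x} = E``{y}" using injb quotientI[OF xy(1)] quotientI[OF xy(2)] by (auto dest: inj_onD)
          then show "x \<in> X \<and> y \<in> X \<and> E``{x} = E``{y}" using xy by simp
        next
          assume "x \<in> X \<and> y \<in> X \<and> E``{x} = E``{y}"
          then show "(x, y) \<in> kerS X \<phi>0" by (auto simp: kerS_def \<phi>0_def)
        qed
        also have "\<dots> \<longleftrightarrow> (x, y) \<in> E" using equiv_class_eq_iff[OF eqv] by blast
        finally show "p \<in> kerS X \<phi>0 \<longleftrightarrow> p \<in> E" using p by simp
      qed
      have "\<phi>0 ` X = {..<m}" using c2 c3 by blast
      then have "\<phi>0 \<in> ?S" using c1 c4 by simp
      then show False using True by blast
    qed
    moreover have "card ?S = 0" using True by (simp only: card.empty)
    ultimately show ?thesis by simp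
  qed
qed

lemma card_filter_sum: "finite A \<Longrightarrow> (of_nat (card {x\<in>A. P x}) :: rat) = (\<Sum>x\<in>A. if P x then 1 else 0)"
  by (simp add: sum.inter_filter[symmetric])

context HP
begin

lemma wt_sz:
  assumes finX: "finite X" and phi: "\<phi> \<in> X \<rightarrow>\<^sub>E {..<m}"
  shows "wt m (sz X \<phi>) = (if \<phi> ` X = {..<m} then G X \<phi> else 0)"
proof -
  have im: "\<phi> ` X \<subseteq> {..<m}" using phi by (auto simp: PiE_def Pi_def)
  have "(\<forall>c<m. 1 \<le> sz X \<phi> c) \<longleftrightarrow> \<phi> ` X = {..<m}"
  proof
    assume h: "\<forall>c<m. 1 \<le> sz X \<phi> c"
    have "c \<in> \<phi> ` X" if "c < m" for c
    proof -
      have "card {x\<in>X. \<phi> x = c} \<noteq> 0" using h that by (auto simp: sz_def)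
      then obtain x where "x \<in> X" "\<phi> x = c" by (metis (mono_tags, lifting) card.empty empty_Collect_eq)
      then show ?thesis by auto
    qed
    then show "\<phi> ` X = {..<m}" using im by auto
  next
    assume h: "\<phi> ` X = {..<m}"
    show "\<forall>c<m. 1 \<le> sz X \<phi> c"
    proof (intro allI impI)
      fix c assume "c < m"
      then obtain x where x: "x \<in> X" "\<phi> x = c" using h by (metis imageE lessThan_iff)
      have "finite {x\<in>X. \<phi> x = c}" using finX by simp
      moreover have "{x\<in>X. \<phi> x = c} \<noteq> {}" using x by auto
      ultimately show "1 \<le> sz X \<phi> c" by (simp add: sz_def Suc_le_eq card_gt_0_iff)
    qed
  qed
  then show ?thesis unfolding wt_def using G_coloring[OF finX im] by simp
qed

lemma count_m:
  assumes finX: "finite X"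
  shows "SumC X m (wt m) = (\<Sum>M\<in>{M\<in>H. carrier M = X}.
           of_nat (if card (X // swap_equiv R ar C M) = m then fact m else 0))"
proof -
  let ?HX = "{M\<in>H. carrier M = X}"
  let ?P = "X \<rightarrow>\<^sub>E {..<m}"
  have finHX: "finite ?HX" using finite_HX[OF finX, of "\<lambda>_. True"] by simp
  have finP: "finite ?P" using finX by (intro finite_PiE) auto
  have "SumC X m (wt m) = (\<Sum>\<phi>\<in>?P. of_nat (wt m (sz X \<phi>)))" by (simp add: SumC_def)
  also have "\<dots> = (\<Sum>\<phi>\<in>?P. \<Sum>M\<in>?HX. if \<phi> ` X = {..<m} \<and> swap_equiv R ar C M = kerS X \<phi> then 1 else 0)"
  proof (rule sum.cong[OF refl])
    fix \<phi> assume phi: "\<phi> \<in> ?P"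
    have "G X \<phi> = card {M\<in>?HX. swap_equiv R ar C M = kerS X \<phi>}" unfolding G_def
      by (rule arg_cong[where f=card]) auto
    then have "(of_nat (G X \<phi>) :: rat) = (\<Sum>M\<in>?HX. if swap_equiv R ar C M = kerS X \<phi> then 1 else 0)"
      using card_filter_sum[OF finHX] by simp
    then show "of_nat (wt m (sz X \<phi>)) = (\<Sum>M\<in>?HX. if \<phi> ` X = {..<m} \<and> swap_equiv R ar C M = kerS X \<phi> then 1 else (0::rat))"
      using wt_sz[OF finX phi] by simp
  qed
  also have "\<dots> = (\<Sum>M\<in>?HX. \<Sum>\<phi>\<in>?P. if \<phi> ` X = {..<m} \<and> swap_equiv R ar C M = kerS X \<phi> then 1 else 0)"
    by (rule sum.swap)
  also have "\<dots> = (\<Sum>M\<in>?HX. of_nat (if card (X // swap_equiv R ar C M) = m then fact m else 0))"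
  proof (rule sum.cong[OF refl])
    fix M assume M: "M \<in> ?HX"
    have eqv: "equiv X (swap_equiv R ar C M)" using swap_equiv_equiv[OF H_wf] M by auto
    have "(\<Sum>\<phi>\<in>?P. if \<phi> ` X = {..<m} \<and> swap_equiv R ar C M = kerS X \<phi> then 1 else 0) =
          (of_nat (card {\<phi>\<in>?P. \<phi> ` X = {..<m} \<and> kerS X \<phi> = swap_equiv R ar C M}) :: rat)"
      using card_filter_sum[OF finP] by (simp add: eq_commute[of "swap_equiv R ar C M"])
    also have "\<dots> = of_nat (if card (X // swap_equiv R ar C M) = m then fact m else 0)"
      using count_colorings[OF finX eqv, of m] by simp
    finally show "(\<Sum>\<phi>\<in>?P. if \<phi> ` X = {..<m} \<and> swap_equiv R ar C M = kerS X \<phi> then 1 else 0) =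
          (of_nat (if card (X // swap_equiv R ar C M) = m then fact m else 0) :: rat)" .
  qed
  finally show ?thesis .
qed

lemma count_Hn:
  assumes bnd: "\<And>M. M \<in> H \<Longrightarrow> card (carrier M // swap_equiv R ar C M) \<le> k"
  shows "(of_nat (card (H_n H n)) :: rat) = (\<Sum>m\<le>k. (1 / fact m) * Sseq m (wt m) n)"
proof -
  define X where "X = {1..n}"
  have finX: "finite X" by (simp add: X_def)
  let ?HX = "{M\<in>H. carrier M = X}"
  let ?q = "\<lambda>M. card (X // swap_equiv R ar C M)"
  have "(\<Sum>m\<le>k. (1 / fact m) * Sseq m (wt m) n) = (\<Sum>m\<le>k. (1 / fact m) * SumC X m (wt m))"
    using SumC_card[OF finX] by (simp add: X_def)
  also have "\<dots> = (\<Sum>m\<le>k. \<Sum>M\<in>?HX. (if ?q M = m then 1 else 0 :: rat))"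
  proof (rule sum.cong[OF refl])
    fix m
    have "(1 / fact m) * SumC X m (wt m) =
          (\<Sum>M\<in>?HX. (1 / fact m) * (of_nat (if ?q M = m then fact m else 0) :: rat))"
      by (simp add: count_m[OF finX] sum_distrib_left)
    also have "\<dots> = (\<Sum>M\<in>?HX. (if ?q M = m then 1 else 0 :: rat))"
      by (rule sum.cong[OF refl]) simp
    finally show "(1 / fact m) * SumC X m (wt m) = (\<Sum>M\<in>?HX. (if ?q M = m then 1 else 0 :: rat))" .
  qed
  also have "\<dots> = (\<Sum>M\<in>?HX. \<Sum>m\<le>k. (if ?q M = m then 1 else 0 :: rat))" by (rule sum.swap)
  also have "\<dots> = (\<Sum>M\<in>?HX. 1)"
  proof (rule sum.cong[OF refl])
    fix M assume M: "M \<in> ?HX"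
    have "?q M \<le> k" using bnd[of M] M by simp
    then show "(\<Sum>m\<le>k. (if ?q M = m then 1 else 0 :: rat)) = 1"
      by (simp add: sum.delta')
  qed
  also have "\<dots> = of_nat (card ?HX)" by simp
  also have "?HX = H_n H n" by (simp add: H_n_def X_def)
  finally show ?thesis by simp
qed

end

lemma main_result:
  fixes R :: "'r set" and ar :: "'r \<Rightarrow> nat" and C :: "'c set"
    and H :: "('r, 'c) struc set"
  assumes "finite R" and "finite C"
    and "hereditary R ar C H" and "basic R ar C H"
  shows "\<exists>(k::nat) (p :: nat \<Rightarrow> rat poly). \<exists>N. \<forall>n\<ge>N.
           of_nat (card (H_n H n)) = (\<Sum>i=1..k. poly (p i) (of_nat n) * of_nat i ^ n)"
proof -
  interpret HP R ar C H using assms(1-3) by unfold_locales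
  obtain k where k: "\<And>M. M \<in> H \<Longrightarrow> card (carrier M // swap_equiv R ar C M) \<le> k"
    using assms(4) unfolding basic_def by blast
  define A where "A = Max (insert 0 (ar ` R))"
  have arA: "\<And>r. r \<in> R \<Longrightarrow> ar r \<le> A" unfolding A_def using assms(1) by auto
  have "(\<lambda>n. \<Sum>m\<le>k. (1 / fact m) * Sseq m (wt m) n) \<in> ES"
    by (intro ES_sum ES.smul Sseq_ES[OF wt_cellmono[OF arA]]) simp
  then have "(\<lambda>n. of_nat (card (H_n H n)) :: rat) \<in> ES"
    by (rule ES_cong) (simp add: count_Hn[OF k])
  then have "EPform (\<lambda>n. of_nat (card (H_n H n)))" by (rule ES_EPform)
  then show ?thesis unfolding EPform_def by simp
qed

theorem mainTheorem4:
  fixes R :: "'r set" and ar :: "'r \<Rightarrow> nat" and C :: "'c set"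
    and H :: "('r, 'c) struc set"
  assumes "finite R" and "finite C"
    and "hereditary R ar C H" and "basic R ar C H" and "\<not> trivial H"
  shows "\<exists>(k::nat) (p :: nat \<Rightarrow> rat poly). \<exists>N. \<forall>n\<ge>N.
           of_nat (card (H_n H n)) = (\<Sum>i=1..k. poly (p i) (of_nat n) * of_nat i ^ n)"
  using main_result[OF assms(1-4)] .

end
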